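(* Let $\Gamma$ be a (not necessarily finite) subgroup of $GL_k(\mathbb{C})$ with defining representation $\pi$ on $\mathbb{C}^k$, and let $n\ge1$. Let $\Gamma_n$ act on $\mathbb{C}^{kn}=(\mathbb{C}^k)^n$. Then the virtual characters $\lambda(\mathbb{C}^{kn}):=\sum_{i=0}^{kn}(-1)^i\Lambda^i\mathbb{C}^{kn}$ and $\eta_n(\lambda(\pi))$ of $\Gamma_n$ are equal. Here $\lambda(\pi)=\sum_{i=0}^k(-1)^i\Lambda^i\pi$.
   Context: $\Gamma_n=\Gamma^n\rtimes S_n$ is the wreath product, with multiplication $(g,\sigma)(h,\tau)=(g\,\sigma(h),\sigma\tau)$ and $S_n$ permuting the factors of $\Gamma^n$. It acts on $(\mathbb{C}^k)^n$ by letting $\Gamma^n$ act factorwise via $\pi$ and $S_n$ permute the factors; $\Lambda^i\mathbb{C}^{kn}$ carries the induced action. For a representation $V$ of $\Gamma$ with character $\gamma$, $\eta_n(\gamma)$ is the character of $V^{\otimes n}$, on which $\Gamma^n$ acts factor by factor and $S_n$ permutes the factors. $\varepsilon_n(\gamma)$ is the character of $\varepsilon_n\otimes V^{\otimes n}$, where $\varepsilon_n$ is the one-dimensional representation of $\Gamma_n$ that is trivial on $\Gamma^n$ and the sign on $S_n$. $\eta_n$ is extended to virtual characters by the rule, for characters $\beta,\gamma$ of $\Gamma$: $\eta_n(\beta-\gamma)=\sum_{m=0}^n(-1)^m\mathrm{Ind}^{\Gamma_n}_{\Gamma_{n-m}\times\Gamma_m}\big[\eta_{n-m}(\beta)\otimes\varepsilon_m(\gamma)\big]$.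 In particular $\eta_n(\lambda(\pi))$ is obtained with $\beta=\sum_{i\text{ even}}\Lambda^i\pi$ and $\gamma=\sum_{i\text{ odd}}\Lambda^i\pi$. *)

theory Defs
  imports "Jordan_Normal_Form.Determinant"
begin

definition subgroup_GL :: "nat \<Rightarrow> complex mat set \<Rightarrow> bool" where
  "subgroup_GL k \<Gamma> \<longleftrightarrow> \<Gamma> \<subseteq> carrier_mat k k \<and> 1\<^sub>m k \<in> \<Gamma>
     \<and> (\<forall>A\<in>\<Gamma>. \<forall>B\<in>\<Gamma>. A * B \<in> \<Gamma>)
     \<and> (\<forall>A\<in>\<Gamma>. \<exists>B\<in>\<Gamma>. A * B = 1\<^sub>m k \<and> B * A = 1\<^sub>m k)"

text \<open>Matrix entry of Lambda^i A in the standard basis e_S (S an i-subset of the index set,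
  listed increasingly): the minor of A with rows S and columns T.\<close>
definition wedge_entry :: "complex mat \<Rightarrow> nat set \<Rightarrow> nat set \<Rightarrow> complex" where
  "wedge_entry A S T = det (mat (card S) (card S)
      (\<lambda>(r, c). A $$ (sorted_list_of_set S ! r, sorted_list_of_set T ! c)))"

definition ext_char :: "nat \<Rightarrow> complex mat \<Rightarrow> complex" where
  "ext_char i A = (\<Sum>S\<in>{S. S \<subseteq> {0..<dim_row A} \<and> card S = i}. wedge_entry A S S)"

definition lambda_char :: "complex mat \<Rightarrow> complex" where
  "lambda_char A = (\<Sum>i = 0..dim_row A. (-1) ^ i * ext_char i A)"

text \<open>The representations beta = sum_{i even} Lambda^i pi and gamma = sum_{i odd} Lambda^i pi,
  with basis the subsets of {0..<k} of even resp. odd cardinality, and the matrix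
  of g (block diagonal with blocks Lambda^i g).\<close>
definition even_basis :: "nat \<Rightarrow> nat set set" where
  "even_basis k = {S. S \<subseteq> {0..<k} \<and> even (card S)}"

definition odd_basis :: "nat \<Rightarrow> nat set set" where
  "odd_basis k = {S. S \<subseteq> {0..<k} \<and> odd (card S)}"

definition wedge_sum_rep :: "complex mat \<Rightarrow> nat set \<Rightarrow> nat set \<Rightarrow> complex" where
  "wedge_sum_rep A S T = (if card S = card T then wedge_entry A S T else 0)"

definition wreath :: "complex mat set \<Rightarrow> nat \<Rightarrow> nat \<Rightarrow> ((nat \<Rightarrow> complex mat) \<times> (nat \<Rightarrow> nat)) set" where
  "wreath \<Gamma> k n = {(g, \<sigma>). (\<forall>j<n. g j \<in> \<Gamma>) \<and> (\<forall>j\<ge>n. g j = 1\<^sub>m k) \<and> \<sigma> permutes {..<n}}"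

text \<open>(g,sigma)(h,tau) = (g sigma(h), sigma tau), where sigma(h)_j = h_{sigma^{-1} j}.\<close>
definition wmult :: "nat \<Rightarrow> nat \<Rightarrow> ((nat \<Rightarrow> complex mat) \<times> (nat \<Rightarrow> nat))
    \<Rightarrow> ((nat \<Rightarrow> complex mat) \<times> (nat \<Rightarrow> nat)) \<Rightarrow> ((nat \<Rightarrow> complex mat) \<times> (nat \<Rightarrow> nat))" where
  "wmult k n x y = (\<lambda>j. if j < n then fst x j * fst y (Hilbert_Choice.inv (snd x) j) else 1\<^sub>m k, snd x \<circ> snd y)"

definition wone :: "nat \<Rightarrow> (nat \<Rightarrow> complex mat) \<times> (nat \<Rightarrow> nat)" where
  "wone k = (\<lambda>j. 1\<^sub>m k, id)"

definition winv :: "complex mat set \<Rightarrow> nat \<Rightarrow> nat \<Rightarrow> ((nat \<Rightarrow> complex mat) \<times> (nat \<Rightarrow> nat))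
    \<Rightarrow> ((nat \<Rightarrow> complex mat) \<times> (nat \<Rightarrow> nat))" where
  "winv \<Gamma> k n x = (THE y. y \<in> wreath \<Gamma> k n \<and> wmult k n x y = wone k)"

text \<open>Matrix of (g,sigma) acting on (C^k)^n = C^{kn}: ((g,sigma) x)_j = g_j x_{sigma^{-1} j};
  coordinate a of block j has index j*k + a.\<close>
definition wmat :: "nat \<Rightarrow> nat \<Rightarrow> (nat \<Rightarrow> complex mat) \<times> (nat \<Rightarrow> nat) \<Rightarrow> complex mat" where
  "wmat k n x = mat (k * n) (k * n) (\<lambda>(r, c).
      if c div k = Hilbert_Choice.inv (snd x) (r div k) then fst x (r div k) $$ (r mod k, c mod k) else 0)"

text \<open>Character of the tensor power V^{\<otimes> I} (factors indexed by I) at (g,sigma),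
  where V has basis B and g acts on V by the matrix rho g, Gamma^I acts factorwise and
  sigma permutes the factors: the trace of
  e_b \<mapsto> \<otimes>_j rho(g_j) e_{b (sigma^{-1} j)}.\<close>
definition tensor_char :: "'b set \<Rightarrow> (complex mat \<Rightarrow> 'b \<Rightarrow> 'b \<Rightarrow> complex) \<Rightarrow> nat set
    \<Rightarrow> (nat \<Rightarrow> complex mat) \<times> (nat \<Rightarrow> nat) \<Rightarrow> complex" where
  "tensor_char B \<rho> I x = (\<Sum>a\<in>I \<rightarrow>\<^sub>E B. \<Prod>j\<in>I. \<rho> (fst x j) (a j) (a (Hilbert_Choice.inv (snd x) j)))"

definition restrict_perm :: "(nat \<Rightarrow> nat) \<Rightarrow> nat set \<Rightarrow> nat \<Rightarrow> nat" where
  "restrict_perm \<sigma> I = (\<lambda>j. if j \<in> I then \<sigma> j else j)"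

text \<open>The Young-type subgroup Gamma_{n-m} \<times> Gamma_m of Gamma_n (positions {0..<n-m} and {n-m..<n}).\<close>
definition young_sub :: "complex mat set \<Rightarrow> nat \<Rightarrow> nat \<Rightarrow> nat \<Rightarrow> ((nat \<Rightarrow> complex mat) \<times> (nat \<Rightarrow> nat)) set" where
  "young_sub \<Gamma> k n m = {x \<in> wreath \<Gamma> k n. snd x ` {..<n - m} = {..<n - m}}"

text \<open>eta_{n-m}(beta) \<otimes> epsilon_m(gamma) as a class function on Gamma_{n-m} \<times> Gamma_m.\<close>
definition eta_eps_char :: "nat \<Rightarrow> nat \<Rightarrow> nat \<Rightarrow> (nat \<Rightarrow> complex mat) \<times> (nat \<Rightarrow> nat) \<Rightarrow> complex" where
  "eta_eps_char k n m x =
     tensor_char (even_basis k) wedge_sum_rep {..<n - m} x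
     * of_int (sign (restrict_perm (snd x) {n - m..<n}))
     * tensor_char (odd_basis k) wedge_sum_rep {n - m..<n} x"

definition ind_char :: "'g set \<Rightarrow> ('g \<Rightarrow> 'g \<Rightarrow> 'g) \<Rightarrow> ('g \<Rightarrow> 'g) \<Rightarrow> 'g set \<Rightarrow> ('g \<Rightarrow> complex) \<Rightarrow> 'g \<Rightarrow> complex" where
  "ind_char G gmult ginv H \<chi> x =
     (\<Sum>C\<in>{(\<lambda>h. gmult y h) ` H | y. y \<in> G}.
        let y = (SOME y. y \<in> C); z = gmult (ginv y) (gmult x y) in if z \<in> H then \<chi> z else 0)"

text \<open>eta_n(lambda(pi)) = sum_m (-1)^m Ind [eta_{n-m}(beta) \<otimes> epsilon_m(gamma)].\<close>
definition eta_lambda :: "complex mat set \<Rightarrow> nat \<Rightarrow> nat \<Rightarrow> (nat \<Rightarrow> complex mat) \<times> (nat \<Rightarrow> nat) \<Rightarrow> complex" where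
  "eta_lambda \<Gamma> k n x = (\<Sum>m = 0..n. (-1) ^ m *
      ind_char (wreath \<Gamma> k n) (wmult k n) (winv \<Gamma> k n) (young_sub \<Gamma> k n m) (eta_eps_char k n m) x)"

end

theory Submission
  imports Defs
begin

definition pdet :: "complex mat \<Rightarrow> nat set \<Rightarrow> complex" where
  "pdet M S = (\<Sum>q | q permutes S. of_int (sign q) * (\<Prod>i\<in>S. M $$ (i, q i)))"

lemma sum_perm_reindex:
  fixes f :: "'b \<Rightarrow> 'b \<Rightarrow> complex" and e :: "'a \<Rightarrow> 'b"
  assumes e: "bij_betw e D S" and fin: "finite D"
  shows "(\<Sum>q | q permutes S. of_int (sign q) * (\<Prod>i\<in>S. f i (q i)))
       = (\<Sum>q | q permutes D. of_int (sign q) * (\<Prod>x\<in>D. f (e x) (e (q x))))"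
proof -
  let ?phi = "\<lambda>q. map_permutation D e q"
  let ?psi = "\<lambda>q. map_permutation S (inv_into D e) q"
  have ie: "bij_betw (inv_into D e) S D" using e by (rule bij_betw_inv_into)
  have inj: "inj_on e D" using e bij_betw_imp_inj_on by blast
  have finS: "finite S" using e fin bij_betw_finite by blast
  have bij: "bij_betw ?phi {q. q permutes D} {q. q permutes S}"
  proof (rule bij_betwI[where g = ?psi])
    show "?phi \<in> {q. q permutes D} \<rightarrow> {q. q permutes S}"
      using map_permutation_permutes[OF e] by auto
    show "?psi \<in> {q. q permutes S} \<rightarrow> {q. q permutes D}"
      using map_permutation_permutes[OF ie] by auto
    show "?psi (?phi q) = q" if "q \<in> {q. q permutes D}" for q
      using map_permutation_compose_inv[OF e, of q "inv_into D e"] that inj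
      by (auto simp: inv_into_f_f)
    show "?phi (?psi q) = q" if "q \<in> {q. q permutes S}" for q
      using map_permutation_compose_inv[OF ie, of q e] that e
      by (auto simp: f_inv_into_f bij_betw_def)
  qed
  have "(\<Sum>q | q permutes S. of_int (sign q) * (\<Prod>i\<in>S. f i (q i)))
     = (\<Sum>q | q permutes D. of_int (sign (?phi q)) * (\<Prod>i\<in>S. f i (?phi q i)))"
    by (rule sum.reindex_bij_betw[OF bij, symmetric])
  also have "\<dots> = (\<Sum>q | q permutes D. of_int (sign q) * (\<Prod>x\<in>D. f (e x) (e (q x))))"
  proof (rule sum.cong[OF refl])
    fix q assume q: "q \<in> {q. q permutes D}"
    have s: "sign (?phi q) = sign q" using sign_map_permutation[OF inj _ fin] q by auto
    have "(\<Prod>i\<in>S. f i (?phi q i)) = (\<Prod>x\<in>D. f (e x) (?phi q (e x)))"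
      using prod.reindex_bij_betw[OF e, of "\<lambda>i. f i (?phi q i)"] by simp
    also have "\<dots> = (\<Prod>x\<in>D. f (e x) (e (q x)))"
      by (rule prod.cong[OF refl]) (simp add: map_permutation_apply[OF inj])
    finally show "of_int (sign (?phi q)) * (\<Prod>i\<in>S. f i (?phi q i)) = of_int (sign q) * (\<Prod>x\<in>D. f (e x) (e (q x)))"
      using s by simp
  qed
  finally show ?thesis .
qed

lemma wedge_entry_leibniz:
  "wedge_entry A S T = (\<Sum>p | p permutes {0..<card S}. of_int (sign p) *
      (\<Prod>i=0..<card S. A $$ (sorted_list_of_set S ! i, sorted_list_of_set T ! (p i))))"
  unfolding wedge_entry_def det_def
  by simp

lemma bij_sorted_nth:
  assumes "finite S"
  shows "bij_betw (\<lambda>i. sorted_list_of_set S ! i) {0..<card S} S"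
proof -
  have "bij_betw ((!) (sorted_list_of_set S)) {..<length (sorted_list_of_set S)} (set (sorted_list_of_set S))"
    by (rule bij_betw_nth) auto
  then show ?thesis using assms by (simp add: atLeast0LessThan)
qed

lemma wedge_entry_pdet:
  assumes "finite S"
  shows "wedge_entry A S S = pdet A S"
  unfolding wedge_entry_leibniz pdet_def
  using sum_perm_reindex[OF bij_sorted_nth[OF assms], of "\<lambda>i j. A $$ (i, j)"]
  by simp

lemma det_one_plus_diag:
  assumes M: "M \<in> carrier_mat N N"
  shows "det (1\<^sub>m N + mat N N (\<lambda>(i,j). l i * M $$ (i,j))) = (\<Sum>S\<in>Pow {0..<N}. (\<Prod>i\<in>S. l i) * pdet M S)"
proof -
  let ?A = "{0..<N}"
  have "det (1\<^sub>m N + mat N N (\<lambda>(i,j). l i * M $$ (i,j))) =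
     (\<Sum>p | p permutes ?A. of_int (sign p) * (\<Prod>i\<in>?A. l i * M $$ (i, p i) + (if p i = i then 1 else 0)))"
    apply (subst det_def'[of _ N], simp)
    apply (rule sum.cong[OF refl])
    apply (rule arg_cong[where f = "\<lambda>x. _ * x"])
    apply (rule prod.cong[OF refl])
    using permutes_in_image by fastforce
  also have "\<dots> = (\<Sum>p | p permutes ?A. \<Sum>X\<in>Pow ?A. of_int (sign p) * ((\<Prod>i\<in>X. l i * M $$ (i, p i)) * (\<Prod>i\<in>?A - X. (if p i = i then 1 else 0))))"
    by (simp add: prod_add sum_distrib_left)
  also have "\<dots> = (\<Sum>X\<in>Pow ?A. \<Sum>p | p permutes ?A. of_int (sign p) * ((\<Prod>i\<in>X. l i * M $$ (i, p i)) * (\<Prod>i\<in>?A - X. (if p i = i then 1 else 0))))"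
    by (rule sum.swap)
  also have "\<dots> = (\<Sum>X\<in>Pow ?A. (\<Prod>i\<in>X. l i) * pdet M X)"
  proof (rule sum.cong[OF refl])
    fix X assume X: "X \<in> Pow ?A"
    have fin: "finite {p. p permutes ?A}" by (simp add: finite_permutations)
    have eqset: "{p \<in> {p. p permutes ?A}. \<forall>i\<in>?A - X. p i = i} = {p. p permutes X}"
    proof safe
      fix p assume p: "p permutes ?A" "\<forall>i\<in>?A - X. p i = i"
      show "p permutes X" unfolding permutes_def
      proof
        show "\<forall>x. x \<notin> X \<longrightarrow> p x = x" using p permutes_not_in by (metis Diff_iff)
        show "\<forall>y. \<exists>!x. p x = y" using p(1) unfolding permutes_def by blast
      qed
    next
      fix p assume "p permutes X" then show "p permutes ?A" using X permutes_subset by blast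
    next
      fix p i assume "p permutes X" "i \<in> ?A" "i \<notin> X" then show "p i = i" using permutes_not_in by metis
    qed
    have "(\<Sum>p | p permutes ?A. of_int (sign p) * ((\<Prod>i\<in>X. l i * M $$ (i, p i)) * (\<Prod>i\<in>?A - X. (if p i = i then 1 else 0))))
        = (\<Sum>p \<in> {p. p permutes ?A}. if (\<forall>i\<in>?A - X. p i = i) then of_int (sign p) * (\<Prod>i\<in>X. l i * M $$ (i, p i)) else 0)"
    proof (rule sum.cong[OF refl])
      fix p
      have "(\<Prod>i\<in>?A - X. (if p i = i then 1 else 0::complex)) = (if \<forall>i\<in>?A - X. p i = i then 1 else 0)"
      proof (cases "\<forall>i\<in>?A - X. p i = i")
        case True then show ?thesis by (auto intro: prod.neutral)
      next
        case False then obtain i where "i \<in> ?A - X" "p i \<noteq> i" by blast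
        then have "(\<Prod>i\<in>?A - X. (if p i = i then 1 else 0::complex)) = 0"
          by (intro prod_zero) auto
        then show ?thesis using False by simp
      qed
      then show "of_int (sign p) * ((\<Prod>i\<in>X. l i * M $$ (i, p i)) * (\<Prod>i\<in>?A - X. (if p i = i then 1 else 0)))
        = (if (\<forall>i\<in>?A - X. p i = i) then of_int (sign p) * (\<Prod>i\<in>X. l i * M $$ (i, p i)) else 0)" by simp
    qed
    also have "\<dots> = (\<Sum>p \<in> {p \<in> {p. p permutes ?A}. \<forall>i\<in>?A - X. p i = i}. of_int (sign p) * (\<Prod>i\<in>X. l i * M $$ (i, p i)))"
      by (rule sum.inter_filter[OF fin, symmetric])
    also have "\<dots> = (\<Sum>p | p permutes X. of_int (sign p) * (\<Prod>i\<in>X. l i * M $$ (i, p i)))"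
      by (simp only: eqset)
    also have "\<dots> = (\<Prod>i\<in>X. l i) * pdet M X"
      by (simp add: pdet_def sum_distrib_left prod.distrib algebra_simps)
    finally show "(\<Sum>p | p permutes ?A. of_int (sign p) * ((\<Prod>i\<in>X. l i * M $$ (i, p i)) * (\<Prod>i\<in>?A - X. (if p i = i then 1 else 0))))
        = (\<Prod>i\<in>X. l i) * pdet M X" .
  qed
  finally show ?thesis .
qed

abbreviation hinv :: "('a \<Rightarrow> 'b) \<Rightarrow> 'b \<Rightarrow> 'a" where "hinv \<equiv> Hilbert_Choice.inv"

definition ginv :: "nat \<Rightarrow> complex mat set \<Rightarrow> complex mat \<Rightarrow> complex mat" where
  "ginv k \<Gamma> A = (SOME B. B \<in> \<Gamma> \<and> A * B = 1\<^sub>m k \<and> B * A = 1\<^sub>m k)"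

lemma ginv:
  assumes "subgroup_GL k \<Gamma>" "A \<in> \<Gamma>"
  shows "ginv k \<Gamma> A \<in> \<Gamma>" "A * ginv k \<Gamma> A = 1\<^sub>m k" "ginv k \<Gamma> A * A = 1\<^sub>m k"
proof -
  have "\<exists>B. B \<in> \<Gamma> \<and> A * B = 1\<^sub>m k \<and> B * A = 1\<^sub>m k" using assms unfolding subgroup_GL_def by blast
  from someI_ex[OF this] show "ginv k \<Gamma> A \<in> \<Gamma>" "A * ginv k \<Gamma> A = 1\<^sub>m k" "ginv k \<Gamma> A * A = 1\<^sub>m k"
    unfolding ginv_def by auto
qed

lemma subgroup_carrier: "subgroup_GL k \<Gamma> \<Longrightarrow> A \<in> \<Gamma> \<Longrightarrow> A \<in> carrier_mat k k"
  unfolding subgroup_GL_def by auto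

lemma subgroup_mult: "subgroup_GL k \<Gamma> \<Longrightarrow> A \<in> \<Gamma> \<Longrightarrow> B \<in> \<Gamma> \<Longrightarrow> A * B \<in> \<Gamma>"
  unfolding subgroup_GL_def by auto

lemma subgroup_one: "subgroup_GL k \<Gamma> \<Longrightarrow> 1\<^sub>m k \<in> \<Gamma>"
  unfolding subgroup_GL_def by auto

lemma wreathD:
  assumes "x \<in> wreath \<Gamma> k n"
  shows "\<And>j. j < n \<Longrightarrow> fst x j \<in> \<Gamma>" "\<And>j. j \<ge> n \<Longrightarrow> fst x j = 1\<^sub>m k" "snd x permutes {..<n}"
  using assms unfolding wreath_def by auto

lemma wreathI:
  assumes "\<And>j. j < n \<Longrightarrow> fst x j \<in> \<Gamma>" "\<And>j. j \<ge> n \<Longrightarrow> fst x j = 1\<^sub>m k" "snd x permutes {..<n}"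
  shows "x \<in> wreath \<Gamma> k n"
  using assms unfolding wreath_def by (cases x) auto

lemma perm_lt: "\<sigma> permutes {..<n} \<Longrightarrow> j < n \<Longrightarrow> \<sigma> j < n"
  using permutes_in_image by fastforce

lemma perm_inv_lt: "\<sigma> permutes {..<n} \<Longrightarrow> j < n \<Longrightarrow> hinv \<sigma> j < n"
  using perm_lt permutes_inv by blast

lemma wmult_closed:
  assumes G: "subgroup_GL k \<Gamma>" and x: "x \<in> wreath \<Gamma> k n" and y: "y \<in> wreath \<Gamma> k n"
  shows "wmult k n x y \<in> wreath \<Gamma> k n"
proof (rule wreathI)
  show "fst (wmult k n x y) j \<in> \<Gamma>" if "j < n" for j
    using that wreathD[OF x] wreathD[OF y] perm_inv_lt[OF wreathD(3)[OF x] that] subgroup_mult[OF G]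
    by (simp add: wmult_def)
  show "fst (wmult k n x y) j = 1\<^sub>m k" if "j \<ge> n" for j using that by (simp add: wmult_def)
  show "snd (wmult k n x y) permutes {..<n}"
    using wreathD(3)[OF x] wreathD(3)[OF y] by (simp add: wmult_def permutes_compose)
qed

definition wi :: "nat \<Rightarrow> complex mat set \<Rightarrow> nat \<Rightarrow> ((nat \<Rightarrow> complex mat) \<times> (nat \<Rightarrow> nat))
    \<Rightarrow> ((nat \<Rightarrow> complex mat) \<times> (nat \<Rightarrow> nat))" where
  "wi k \<Gamma> n y = (\<lambda>j. if j < n then ginv k \<Gamma> (fst y (snd y j)) else 1\<^sub>m k, hinv (snd y))"

lemma wi_closed:
  assumes G: "subgroup_GL k \<Gamma>" and y: "y \<in> wreath \<Gamma> k n"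
  shows "wi k \<Gamma> n y \<in> wreath \<Gamma> k n"
proof (rule wreathI)
  show "fst (wi k \<Gamma> n y) j \<in> \<Gamma>" if "j < n" for j
    using that wreathD[OF y] perm_lt[OF wreathD(3)[OF y] that] ginv[OF G] by (simp add: wi_def)
  show "fst (wi k \<Gamma> n y) j = 1\<^sub>m k" if "j \<ge> n" for j using that by (simp add: wi_def)
  show "snd (wi k \<Gamma> n y) permutes {..<n}"
    using wreathD(3)[OF y] by (simp add: wi_def permutes_inv)
qed

lemma wi_right:
  assumes G: "subgroup_GL k \<Gamma>" and y: "y \<in> wreath \<Gamma> k n"
  shows "wmult k n y (wi k \<Gamma> n y) = wone k"
proof -
  have p: "snd y permutes {..<n}" using wreathD[OF y] by auto
  have "fst (wmult k n y (wi k \<Gamma> n y)) j = 1\<^sub>m k" for j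
  proof (cases "j < n")
    case True
    then have "hinv (snd y) j < n" using perm_inv_lt[OF p] by auto
    then show ?thesis using True ginv[OF G wreathD(1)[OF y True]]
      by (simp add: wmult_def wi_def permutes_inverses[OF p])
  qed (simp add: wmult_def)
  moreover have "snd (wmult k n y (wi k \<Gamma> n y)) = id"
    by (simp add: wmult_def wi_def permutes_inv_o[OF p])
  ultimately show ?thesis unfolding wone_def by (intro prod_eqI ext) auto
qed

lemma wi_left:
  assumes G: "subgroup_GL k \<Gamma>" and y: "y \<in> wreath \<Gamma> k n"
  shows "wmult k n (wi k \<Gamma> n y) y = wone k"
proof -
  have p: "snd y permutes {..<n}" using wreathD[OF y] by auto
  have ii: "hinv (hinv (snd y)) = snd y" using p by (simp add: permutes_inv_inv)
  have "fst (wmult k n (wi k \<Gamma> n y) y) j = 1\<^sub>m k" for j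
  proof (cases "j < n")
    case True
    then have "snd y j < n" using perm_lt[OF p] by auto
    then show ?thesis using True ginv[OF G wreathD(1)[OF y \<open>snd y j < n\<close>]]
      by (simp add: wmult_def wi_def ii)
  qed (simp add: wmult_def)
  moreover have "snd (wmult k n (wi k \<Gamma> n y) y) = id"
    by (simp add: wmult_def wi_def permutes_inv_o[OF p])
  ultimately show ?thesis unfolding wone_def by (intro prod_eqI ext) auto
qed

lemma winv_eq:
  assumes G: "subgroup_GL k \<Gamma>" and y: "y \<in> wreath \<Gamma> k n"
  shows "winv \<Gamma> k n y = wi k \<Gamma> n y"
  unfolding winv_def
proof (rule the_equality)
  show "wi k \<Gamma> n y \<in> wreath \<Gamma> k n \<and> wmult k n y (wi k \<Gamma> n y) = wone k"
    using wi_closed[OF G y] wi_right[OF G y] by auto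
  fix z assume z: "z \<in> wreath \<Gamma> k n \<and> wmult k n y z = wone k"
  have p: "snd y permutes {..<n}" using wreathD[OF y] by auto
  have s: "snd y \<circ> snd z = id" using z unfolding wmult_def wone_def by simp
  have sz: "snd z = hinv (snd y)"
  proof -
    have "hinv (snd y) \<circ> (snd y \<circ> snd z) = snd z"
      by (simp add: o_assoc permutes_inv_o(2)[OF p])
    then show ?thesis using s by simp
  qed
  have fz: "fst z i = fst (wi k \<Gamma> n y) i" for i
  proof (cases "i < n")
    case True
    let ?j = "snd y i"
    have j: "?j < n" using perm_lt[OF p True] .
    have "fst (wmult k n y z) ?j = 1\<^sub>m k" using z unfolding wone_def by simp
    then have e: "fst y ?j * fst z i = 1\<^sub>m k" using j
      by (simp add: wmult_def permutes_inverses[OF p])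
    have A: "fst y ?j \<in> carrier_mat k k" using subgroup_carrier[OF G wreathD(1)[OF y j]] .
    have B: "fst z i \<in> carrier_mat k k" using subgroup_carrier[OF G wreathD(1)[of z \<Gamma> k n i]] True z by auto
    have C: "ginv k \<Gamma> (fst y ?j) \<in> carrier_mat k k" using subgroup_carrier[OF G ginv(1)[OF G wreathD(1)[OF y j]]] .
    have "fst z i = (ginv k \<Gamma> (fst y ?j) * fst y ?j) * fst z i"
      using ginv(3)[OF G wreathD(1)[OF y j]] B by simp
    also have "\<dots> = ginv k \<Gamma> (fst y ?j)" using e A B C by (simp add: assoc_mult_mat[OF C A B])
    finally show ?thesis using True by (simp add: wi_def)
  next
    case False
    then show ?thesis using wreathD(2)[of z] z by (auto simp: wi_def)
  qed
  show "z = wi k \<Gamma> n y"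
    using fz sz by (intro prod_eqI ext) (simp_all add: wi_def)
qed

lemma sum_blocks:
  fixes g :: "nat \<Rightarrow> 'a::comm_monoid_add"
  shows "(\<Sum>l<k*n. g l) = (\<Sum>m<n. \<Sum>t<k. g (m*k+t))"
proof -
  have "(\<Sum>l<k*n. g l) = (\<Sum>m<n. sum g {m*k..<m*k+k})"
    using sum.nat_group[of g k n] by (simp add: mult.commute)
  also have "\<dots> = (\<Sum>m<n. \<Sum>t<k. g (m*k+t))"
  proof (rule sum.cong[OF refl])
    fix m
    have "sum g {m*k..<m*k+k} = sum g ((\<lambda>t. m*k+t) ` {..<k})"
      by (simp add: image_add_atLeastLessThan lessThan_atLeast0 add.commute)
    also have "\<dots> = (\<Sum>t<k. g (m*k+t))" by (subst sum.reindex) (auto simp: inj_on_def)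
    finally show "sum g {m*k..<m*k+k} = (\<Sum>t<k. g (m*k+t))" .
  qed
  finally show ?thesis .
qed

lemma wmat_carrier: "wmat k n x \<in> carrier_mat (k*n) (k*n)"
  unfolding wmat_def by simp

lemma wmat_index:
  "r < k*n \<Longrightarrow> c < k*n \<Longrightarrow> wmat k n x $$ (r,c) =
     (if c div k = hinv (snd x) (r div k) then fst x (r div k) $$ (r mod k, c mod k) else 0)"
  unfolding wmat_def by simp

lemma div_lt_n: "r < k*n \<Longrightarrow> r div k < (n::nat)"
  by (simp add: less_mult_imp_div_less mult.commute)

lemma block_lt: "m < n \<Longrightarrow> t < k \<Longrightarrow> m*k+t < k*(n::nat)"
proof -
  assume "m < n" "t < k"
  then have "m*k+t < m*k + k" by simp
  also have "\<dots> = (m+1)*k" by simp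
  also have "\<dots> \<le> n*k" using \<open>m<n\<close> by (intro mult_right_mono) auto
  finally show ?thesis by (simp add: mult.commute)
qed

lemma wmat_mult:
  assumes ps: "snd x permutes {..<n}" and pt: "snd y permutes {..<n}"
    and gx: "\<And>j. j < n \<Longrightarrow> fst x j \<in> carrier_mat k k"
    and gy: "\<And>j. j < n \<Longrightarrow> fst y j \<in> carrier_mat k k"
  shows "wmat k n (wmult k n x y) = wmat k n x * wmat k n y"
proof (rule eq_matI)
  show "dim_row (wmat k n (wmult k n x y)) = dim_row (wmat k n x * wmat k n y)"
    "dim_col (wmat k n (wmult k n x y)) = dim_col (wmat k n x * wmat k n y)"
    by (simp_all add: wmat_def)
  fix r c assume "r < dim_row (wmat k n x * wmat k n y)" "c < dim_col (wmat k n x * wmat k n y)"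
  then have r: "r < k*n" and c: "c < k*n" by (simp_all add: wmat_def)
  define J where "J = r div k"
  define J' where "J' = hinv (snd x) J"
  have J: "J < n" using div_lt_n[OF r] J_def by simp
  have J': "J' < n" using perm_inv_lt[OF ps J] J'_def by simp
  have kpos: "k > 0" using r by (cases k) auto
  have "(wmat k n x * wmat k n y) $$ (r,c) = (\<Sum>l<k*n. wmat k n x $$ (r,l) * wmat k n y $$ (l,c))"
    using r c by (simp add: wmat_def scalar_prod_def lessThan_atLeast0)
  also have "\<dots> = (\<Sum>m<n. \<Sum>t<k. wmat k n x $$ (r,m*k+t) * wmat k n y $$ (m*k+t,c))"
    by (rule sum_blocks)
  also have "\<dots> = (\<Sum>m<n. if m = J' then (\<Sum>t<k. fst x J $$ (r mod k, t) * wmat k n y $$ (J'*k+t,c)) else 0)"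
  proof (rule sum.cong[OF refl])
    fix m assume m: "m \<in> {..<n}"
    show "(\<Sum>t<k. wmat k n x $$ (r,m*k+t) * wmat k n y $$ (m*k+t,c)) =
      (if m = J' then (\<Sum>t<k. fst x J $$ (r mod k, t) * wmat k n y $$ (J'*k+t,c)) else 0)"
      using m r block_lt[of m n] kpos
      by (auto simp: wmat_index J_def J'_def intro!: sum.cong)
  qed
  also have "\<dots> = (\<Sum>t<k. fst x J $$ (r mod k, t) * wmat k n y $$ (J'*k+t,c))"
    using J' by (simp add: sum.delta)
  also have "\<dots> = (if c div k = hinv (snd y) J' then (\<Sum>t<k. fst x J $$ (r mod k, t) * fst y J' $$ (t, c mod k)) else 0)"
    using c block_lt[OF J'] kpos by (auto simp: wmat_index intro!: sum.cong)
  also have "\<dots> = (if c div k = hinv (snd y) J' then (fst x J * fst y J') $$ (r mod k, c mod k) else 0)"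
    using gx[OF J] gy[OF J'] kpos
    by (auto simp: scalar_prod_def lessThan_atLeast0)
  also have "\<dots> = wmat k n (wmult k n x y) $$ (r,c)"
  proof -
    have "hinv (snd x \<circ> snd y) = hinv (snd y) \<circ> hinv (snd x)"
      using ps pt by (simp add: o_inv_distrib permutes_bij)
    then show ?thesis using r c J by (simp add: wmat_index wmult_def J_def J'_def)
  qed
  finally show "wmat k n (wmult k n x y) $$ (r,c) = (wmat k n x * wmat k n y) $$ (r,c)" by simp
qed

lemma wmat_one: "wmat k n (wone k) = 1\<^sub>m (k*n)"
proof (rule eq_matI)
  fix r c assume "r < dim_row (1\<^sub>m (k*n))" "c < dim_col (1\<^sub>m (k * n))"
  then have r: "r < k*n" and c: "c < k*n" by auto
  have "(c div k = r div k \<and> r mod k = c mod k) = (r = c)"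
    by (metis div_mult_mod_eq)
  moreover have "k > 0" using r by (cases k) auto
  ultimately show "wmat k n (wone k) $$ (r,c) = 1\<^sub>m (k*n) $$ (r,c)"
    using r c div_lt_n[OF r] by (auto simp: wmat_index wone_def)
qed (auto simp: wmat_def)

definition dmat :: "nat \<Rightarrow> (nat \<Rightarrow> complex) \<Rightarrow> (nat \<Rightarrow> complex mat) \<times> (nat \<Rightarrow> nat)" where
  "dmat k e = (\<lambda>j. e j \<cdot>\<^sub>m 1\<^sub>m k, id)"

lemma wmat_dmat_index:
  "r < k*n \<Longrightarrow> c < k*n \<Longrightarrow> wmat k n (dmat k e) $$ (r,c) = (if r = c then e (r div k) else 0)"
proof -
  assume r: "r < k*n" and c: "c < k*n"
  have "(c div k = r div k \<and> r mod k = c mod k) = (r = c)"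
    by (metis div_mult_mod_eq)
  moreover have "k > 0" using r by (cases k) auto
  ultimately show ?thesis using r c by (auto simp: wmat_index dmat_def)
qed

lemma wmat_dmat_mult:
  assumes A: "A \<in> carrier_mat (k*n) (k*n)"
  shows "wmat k n (dmat k e) * A = mat (k*n) (k*n) (\<lambda>(i,j). e (i div k) * A $$ (i,j))"
proof (rule eq_matI)
  fix i j assume "i < dim_row (mat (k*n) (k*n) (\<lambda>(i,j). e (i div k) * A $$ (i,j)))"
     "j < dim_col (mat (k*n) (k*n) (\<lambda>(i,j). e (i div k) * A $$ (i,j)))"
  then have i: "i < k*n" and j: "j < k*n" by auto
  have "(wmat k n (dmat k e) * A) $$ (i,j) = (\<Sum>l\<in>{0..<k*n}. wmat k n (dmat k e) $$ (i,l) * A $$ (l,j))"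
    using i j A by (simp add: wmat_def scalar_prod_def)
  also have "\<dots> = (\<Sum>l\<in>{0..<k*n}. if i = l then e (i div k) * A $$ (l,j) else 0)"
    using i by (intro sum.cong refl) (simp add: wmat_dmat_index)
  also have "\<dots> = e (i div k) * A $$ (i,j)" using i by (simp add: sum.delta)
  finally show "(wmat k n (dmat k e) * A) $$ (i,j) = mat (k*n) (k*n) (\<lambda>(i,j). e (i div k) * A $$ (i,j)) $$ (i,j)"
    using i j by simp
qed (use A in \<open>auto simp: wmat_def\<close>)

definition blk :: "nat \<Rightarrow> nat set \<Rightarrow> nat \<Rightarrow> nat set" where
  "blk k S j = {r. r < k \<and> j*k + r \<in> S}"

definition pat :: "nat \<Rightarrow> nat \<Rightarrow> nat set \<Rightarrow> nat set" where
  "pat k n S = {j. j < n \<and> odd (card (blk k S j))}"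

definition GT :: "nat \<Rightarrow> nat \<Rightarrow> complex mat \<Rightarrow> nat set \<Rightarrow> complex" where
  "GT k n M T = (\<Sum>S\<in>{S\<in>Pow {0..<k*n}. pat k n S = T}. (-1) ^ card S * pdet M S)"

lemma pat_sub: "pat k n S \<subseteq> {..<n}"
  unfolding pat_def by auto

lemma card_block_eq:
  assumes "k > 0"
  shows "card {i\<in>S. i div k = j} = card (blk k S j)"
proof -
  have "bij_betw (\<lambda>r. j*k + r) (blk k S j) {i\<in>S. i div k = j}"
  proof (rule bij_betwI[where g = "\<lambda>i. i mod k"])
    show "(\<lambda>r. j*k + r) \<in> blk k S j \<rightarrow> {i\<in>S. i div k = j}"
      using assms by (auto simp: blk_def)
    show "(\<lambda>i. i mod k) \<in> {i\<in>S. i div k = j} \<rightarrow> blk k S j"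
      using assms by (auto simp: blk_def)
    show "(j*k + r) mod k = r" if "r \<in> blk k S j" for r using that by (auto simp: blk_def)
    show "j*k + i mod k = i" if "i \<in> {i\<in>S. i div k = j}" for i using that
      by (auto simp: mult.commute)
  qed
  then show ?thesis by (rule bij_betw_same_card[symmetric])
qed

lemma prod_pm1_pow:
  assumes "x \<in> {1, -1::complex}"
  shows "x ^ c = (if odd c then x else 1)"
  using assms by (auto simp: power_minus')

lemma prod_block_pat:
  assumes S: "S \<subseteq> {0..<k*n}" and e: "\<And>j. j < n \<Longrightarrow> e j \<in> {1, -1::complex}"
  shows "(\<Prod>i\<in>S. e (i div k)) = (\<Prod>j\<in>pat k n S. e j)"
proof (cases "k = 0")
  case True
  then have "S = {}" using S by auto
  moreover have "pat k n S = {}" using True by (auto simp: pat_def blk_def)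
  ultimately show ?thesis by simp
next
  case False
  then have kpos: "k > 0" by simp
  have finS: "finite S" using S finite_subset by blast
  have "(\<Prod>i\<in>S. e (i div k)) = (\<Prod>j\<in>{..<n}. \<Prod>i\<in>{i\<in>S. i div k = j}. e (i div k))"
    using S div_lt_n by (intro prod.group[symmetric] finS) auto
  also have "\<dots> = (\<Prod>j\<in>{..<n}. e j ^ card (blk k S j))"
    by (rule prod.cong[OF refl]) (simp add: card_block_eq[OF kpos])
  also have "\<dots> = (\<Prod>j\<in>{..<n}. if j \<in> pat k n S then e j else 1)"
  proof (rule prod.cong[OF refl])
    fix j assume "j \<in> {..<n}"
    then show "e j ^ card (blk k S j) = (if j \<in> pat k n S then e j else 1)"
      using prod_pm1_pow[OF e[of j]] by (simp add: pat_def)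
  qed
  also have "\<dots> = (\<Prod>j\<in>pat k n S. e j)"
    using pat_sub[of k n S] by (simp add: prod.If_cases Int_absorb1)
  finally show ?thesis .
qed

lemma det_expand_pat:
  assumes M: "M \<in> carrier_mat (k*n) (k*n)" and e: "\<And>j. j < n \<Longrightarrow> e j \<in> {1, -1::complex}"
  shows "det (1\<^sub>m (k*n) - wmat k n (dmat k e) * M) = (\<Sum>T\<in>Pow {..<n}. (\<Prod>j\<in>T. e j) * GT k n M T)"
proof -
  have eq: "1\<^sub>m (k*n) - wmat k n (dmat k e) * M = 1\<^sub>m (k*n) + mat (k*n) (k*n) (\<lambda>(i,j). (- e (i div k)) * M $$ (i,j))"
    unfolding wmat_dmat_mult[OF M] by (rule eq_matI) auto
  have "det (1\<^sub>m (k*n) - wmat k n (dmat k e) * M) = (\<Sum>S\<in>Pow {0..<k*n}. (\<Prod>i\<in>S. - e (i div k)) * pdet M S)"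
    unfolding eq by (rule det_one_plus_diag[OF M])
  also have "\<dots> = (\<Sum>S\<in>Pow {0..<k*n}. (\<Prod>j\<in>pat k n S. e j) * ((-1) ^ card S * pdet M S))"
  proof (rule sum.cong[OF refl])
    fix S assume S: "S \<in> Pow {0..<k*n}"
    have "(\<Prod>i\<in>S. - e (i div k)) = (\<Prod>i\<in>S. (-1) * e (i div k))" by simp
    also have "\<dots> = (-1) ^ card S * (\<Prod>i\<in>S. e (i div k))" by (simp only: prod.distrib prod_constant)
    also have "\<dots> = (-1) ^ card S * (\<Prod>j\<in>pat k n S. e j)" using prod_block_pat[of S k n e] S e by auto
    finally show "(\<Prod>i\<in>S. - e (i div k)) * pdet M S = (\<Prod>j\<in>pat k n S. e j) * ((-1) ^ card S * pdet M S)"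
      by simp
  qed
  also have "\<dots> = (\<Sum>T\<in>Pow {..<n}. \<Sum>S\<in>{S\<in>Pow {0..<k*n}. pat k n S = T}. (\<Prod>j\<in>pat k n S. e j) * ((-1) ^ card S * pdet M S))"
    by (rule sum.group[symmetric]) (auto simp: pat_def)
  also have "\<dots> = (\<Sum>T\<in>Pow {..<n}. (\<Prod>j\<in>T. e j) * GT k n M T)"
    unfolding GT_def by (rule sum.cong[OF refl]) (simp add: sum_distrib_left)
  finally show ?thesis .
qed

lemma avg_char:
  assumes U: "U \<subseteq> {..<n}" and T: "T \<subseteq> {..<n}"
  shows "(\<Sum>e\<in>{..<n} \<rightarrow>\<^sub>E {1, -1::complex}. (\<Prod>j\<in>U. e j) * (\<Prod>j\<in>T. e j)) = (if T = U then 2 ^ n else 0)"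
proof -
  let ?f = "\<lambda>j x. (if j \<in> U then x else 1) * (if j \<in> T then x else (1::complex))"
  have "(\<Sum>e\<in>{..<n} \<rightarrow>\<^sub>E {1, -1::complex}. (\<Prod>j\<in>U. e j) * (\<Prod>j\<in>T. e j))
      = (\<Sum>e\<in>{..<n} \<rightarrow>\<^sub>E {1, -1::complex}. \<Prod>j<n. ?f j (e j))"
  proof (rule sum.cong[OF refl])
    fix e :: "nat \<Rightarrow> complex"
    have u: "{..<n} \<inter> U = U" and t: "{..<n} \<inter> T = T" using U T by blast+
    have "(\<Prod>j\<in>U. e j) = (\<Prod>j<n. if j \<in> U then e j else 1)"
      by (simp add: prod.If_cases u)
    moreover have "(\<Prod>j\<in>T. e j) = (\<Prod>j<n. if j \<in> T then e j else 1)"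
      by (simp add: prod.If_cases t)
    ultimately show "(\<Prod>j\<in>U. e j) * (\<Prod>j\<in>T. e j) = (\<Prod>j<n. ?f j (e j))"
      by (simp add: prod.distrib)
  qed
  also have "\<dots> = (\<Prod>j<n. \<Sum>x\<in>{1, -1}. ?f j x)"
    by (rule prod_sum_PiE[symmetric]) auto
  also have "\<dots> = (\<Prod>j<n. if (j \<in> U) = (j \<in> T) then 2 else 0)"
    by (rule prod.cong[OF refl]) auto
  also have "\<dots> = (if T = U then 2 ^ n else 0)"
  proof (cases "T = U")
    case True then show ?thesis by simp
  next
    case False
    then obtain j where "j < n" "(j \<in> U) \<noteq> (j \<in> T)" using U T by blast
    then have "(\<Prod>j<n. if (j \<in> U) = (j \<in> T) then 2 else 0) = (0::complex)"
      by (intro prod_zero) auto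
    then show ?thesis using False by simp
  qed
  finally show ?thesis .
qed

lemma GT_avg:
  assumes M: "M \<in> carrier_mat (k*n) (k*n)" and U: "U \<subseteq> {..<n}"
  shows "(\<Sum>e\<in>{..<n} \<rightarrow>\<^sub>E {1, -1::complex}. (\<Prod>j\<in>U. e j) * det (1\<^sub>m (k*n) - wmat k n (dmat k e) * M))
      = 2 ^ n * GT k n M U"
proof -
  have "(\<Sum>e\<in>{..<n} \<rightarrow>\<^sub>E {1, -1::complex}. (\<Prod>j\<in>U. e j) * det (1\<^sub>m (k*n) - wmat k n (dmat k e) * M))
    = (\<Sum>e\<in>{..<n} \<rightarrow>\<^sub>E {1, -1::complex}. \<Sum>T\<in>Pow {..<n}. GT k n M T * ((\<Prod>j\<in>U. e j) * (\<Prod>j\<in>T. e j)))"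
  proof (rule sum.cong[OF refl])
    fix e assume "e \<in> {..<n} \<rightarrow>\<^sub>E {1, -1::complex}"
    then have "\<And>j. j < n \<Longrightarrow> e j \<in> {1, -1}" by auto
    then show "(\<Prod>j\<in>U. e j) * det (1\<^sub>m (k*n) - wmat k n (dmat k e) * M) =
      (\<Sum>T\<in>Pow {..<n}. GT k n M T * ((\<Prod>j\<in>U. e j) * (\<Prod>j\<in>T. e j)))"
      by (simp add: det_expand_pat[OF M] sum_distrib_left algebra_simps)
  qed
  also have "\<dots> = (\<Sum>T\<in>Pow {..<n}. GT k n M T * (\<Sum>e\<in>{..<n} \<rightarrow>\<^sub>E {1, -1::complex}. (\<Prod>j\<in>U. e j) * (\<Prod>j\<in>T. e j)))"
    by (subst sum.swap) (simp add: sum_distrib_left)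
  also have "\<dots> = (\<Sum>T\<in>Pow {..<n}. if T = U then GT k n M T * 2 ^ n else 0)"
    by (rule sum.cong[OF refl]) (use U in \<open>simp add: avg_char\<close>)
  also have "\<dots> = 2 ^ n * GT k n M U" using U by (simp add: sum.delta')
  finally show ?thesis .
qed

lemma wmat_dmat_cong:
  assumes "\<And>j. j < n \<Longrightarrow> e1 j = e2 j"
  shows "wmat k n (dmat k e1) = wmat k n (dmat k e2)"
proof (rule eq_matI)
  fix i j assume "i < dim_row (wmat k n (dmat k e2))" "j < dim_col (wmat k n (dmat k e2))"
  then have i: "i < k*n" and j: "j < k*n" by (auto simp: wmat_def)
  show "wmat k n (dmat k e1) $$ (i,j) = wmat k n (dmat k e2) $$ (i,j)"
    using i j div_lt_n[OF i] div_lt_n[OF j] assms by (simp add: wmat_dmat_index)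
qed (auto simp: wmat_def)

lemma wmat_fst_carrier:
  assumes G: "subgroup_GL k \<Gamma>" and x: "x \<in> wreath \<Gamma> k n"
  shows "\<And>j. j < n \<Longrightarrow> fst x j \<in> carrier_mat k k"
  using subgroup_carrier[OF G] wreathD(1)[OF x] by blast

lemma det_conj:
  assumes G: "subgroup_GL k \<Gamma>" and x: "x \<in> wreath \<Gamma> k n" and y: "y \<in> wreath \<Gamma> k n"
    and e: "\<And>j. j < n \<Longrightarrow> e j \<in> {1, -1::complex}"
  shows "det (1\<^sub>m (k*n) - wmat k n (dmat k e) * wmat k n (wmult k n (wi k \<Gamma> n y) (wmult k n x y)))
       = det (1\<^sub>m (k*n) - wmat k n (dmat k (\<lambda>j. e (hinv (snd y) j))) * wmat k n x)"
proof -
  define yi where "yi = wi k \<Gamma> n y"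
  define e' where "e' = (\<lambda>j. e (hinv (snd y) j))"
  let ?N = "k*n"
  have yi: "yi \<in> wreath \<Gamma> k n" using wi_closed[OF G y] yi_def by simp
  have xy: "wmult k n x y \<in> wreath \<Gamma> k n" using wmult_closed[OF G x y] .
  have ps: "\<And>w. w \<in> wreath \<Gamma> k n \<Longrightarrow> snd w permutes {..<n}" using wreathD(3) by blast
  have fc: "\<And>w j. w \<in> wreath \<Gamma> k n \<Longrightarrow> j < n \<Longrightarrow> fst w j \<in> carrier_mat k k"
    using wmat_fst_carrier[OF G] by blast
  have dps: "snd (dmat k c) permutes {..<n}" for c by (simp add: dmat_def permutes_id)
  have dfc: "fst (dmat k c) j \<in> carrier_mat k k" for c j by (simp add: dmat_def)
  define X where "X = wmat k n x"
  define Y where "Y = wmat k n yi"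
  define Z where "Z = wmat k n y"
  define E where "E = wmat k n (dmat k e)"
  define E' where "E' = wmat k n (dmat k e')"
  have cX: "X \<in> carrier_mat ?N ?N" and cY: "Y \<in> carrier_mat ?N ?N" and cZ: "Z \<in> carrier_mat ?N ?N"
    and cE: "E \<in> carrier_mat ?N ?N" and cE': "E' \<in> carrier_mat ?N ?N"
    by (simp_all add: X_def Y_def Z_def E_def E'_def wmat_carrier)
  have Mz: "wmat k n (wmult k n yi (wmult k n x y)) = Y * (X * Z)"
    unfolding X_def Y_def Z_def
    using wmat_mult[OF ps[OF yi] ps[OF xy] fc[OF yi] fc[OF xy]]
      wmat_mult[OF ps[OF x] ps[OF y] fc[OF x] fc[OF y]] by simp
  have YZ: "Y * Z = 1\<^sub>m ?N"
    unfolding Y_def Z_def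
    using wmat_mult[OF ps[OF yi] ps[OF y] fc[OF yi] fc[OF y]] wi_left[OF G y] wmat_one
    by (simp add: yi_def)
  have EY: "E * Y = Y * E'"
  proof -
    have py: "snd y permutes {..<n}" using ps[OF y] .
    have "wmult k n (dmat k e) yi = wmult k n yi (dmat k e')"
    proof (rule prod_eqI)
      show "fst (wmult k n (dmat k e) yi) = fst (wmult k n yi (dmat k e'))"
      proof (rule ext)
        fix j
        show "fst (wmult k n (dmat k e) yi) j = fst (wmult k n yi (dmat k e')) j"
        proof (cases "j < n")
          case True
          have c: "fst yi j \<in> carrier_mat k k" using fc[OF yi True] .
          have ii: "hinv (hinv (snd y)) = snd y" using py by (simp add: permutes_inv_inv)
          have "e' (hinv (snd yi) j) = e j"
            using py by (simp add: e'_def yi_def wi_def ii permutes_inverses)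
          moreover have "e j \<cdot>\<^sub>m 1\<^sub>m k * fst yi j = fst yi j * (e j \<cdot>\<^sub>m 1\<^sub>m k)"
            using mult_smult_assoc_mat[OF one_carrier_mat c] mult_smult_distrib[OF c one_carrier_mat]
              left_mult_one_mat[OF c] right_mult_one_mat[OF c] by simp
          ultimately show ?thesis using True
            by (simp add: wmult_def dmat_def)
        qed (simp add: wmult_def)
      qed
      show "snd (wmult k n (dmat k e) yi) = snd (wmult k n yi (dmat k e'))"
        by (simp add: wmult_def dmat_def)
    qed
    then have eq: "wmat k n (wmult k n (dmat k e) yi) = wmat k n (wmult k n yi (dmat k e'))" by simp
    have "E * Y = wmat k n (wmult k n (dmat k e) yi)"
      unfolding E_def Y_def using wmat_mult[OF dps ps[OF yi] dfc fc[OF yi]] by simp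
    also have "\<dots> = Y * E'"
      unfolding eq E'_def Y_def using wmat_mult[OF ps[OF yi] dps fc[OF yi] dfc] by simp
    finally show ?thesis .
  qed
  have key: "1\<^sub>m ?N - E * (Y * (X * Z)) = Y * ((1\<^sub>m ?N - E' * X) * Z)"
  proof -
    have "Y * ((1\<^sub>m ?N - E' * X) * Z) = Y * (Z - E' * (X * Z))"
      using cX cZ cE' by (simp add: minus_mult_distrib_mat[of _ ?N ?N] assoc_mult_mat[of _ ?N ?N])
    also have "\<dots> = Y * Z - Y * (E' * (X * Z))"
      using cX cZ cE' cY by (simp add: mult_minus_distrib_mat[of _ ?N ?N])
    also have "\<dots> = 1\<^sub>m ?N - (Y * E') * (X * Z)"
      using cX cZ cE' cY YZ assoc_mult_mat[OF cY cE' mult_carrier_mat[OF cX cZ]] by simp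
    also have "\<dots> = 1\<^sub>m ?N - E * (Y * (X * Z))"
      using EY assoc_mult_mat[OF cE cY mult_carrier_mat[OF cX cZ]] by simp
    finally show ?thesis by simp
  qed
  have "det (1\<^sub>m ?N - E * (Y * (X * Z))) = det Y * (det (1\<^sub>m ?N - E' * X) * det Z)"
  proof -
    have c1: "1\<^sub>m ?N - E' * X \<in> carrier_mat ?N ?N" using cX cE' by auto
    show ?thesis unfolding key
      using det_mult[OF cY mult_carrier_mat[OF c1 cZ]] det_mult[OF c1 cZ] by simp
  qed
  also have "\<dots> = det (1\<^sub>m ?N - E' * X)"
  proof -
    have "det Y * det Z = 1" using det_mult[OF cY cZ] YZ by simp
    then show ?thesis by (simp add: algebra_simps)
  qed
  finally show ?thesis using Mz by (simp add: E_def E'_def X_def yi_def e'_def)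
qed

lemma GT_conj:
  assumes G: "subgroup_GL k \<Gamma>" and x: "x \<in> wreath \<Gamma> k n" and y: "y \<in> wreath \<Gamma> k n"
    and T: "T \<subseteq> {..<n}"
  shows "GT k n (wmat k n (wmult k n (wi k \<Gamma> n y) (wmult k n x y))) T = GT k n (wmat k n x) (snd y ` T)"
proof -
  let ?N = "k*n"
  let ?E = "{..<n} \<rightarrow>\<^sub>E {1, -1::complex}"
  define \<tau> where "\<tau> = snd y"
  have p: "\<tau> permutes {..<n}" using wreathD(3)[OF y] \<tau>_def by simp
  have TT: "\<tau> ` T \<subseteq> {..<n}" using T perm_lt[OF p] by auto
  define Mz where "Mz = wmat k n (wmult k n (wi k \<Gamma> n y) (wmult k n x y))"
  have cMz: "Mz \<in> carrier_mat ?N ?N" by (simp add: Mz_def wmat_carrier)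
  have cMx: "wmat k n x \<in> carrier_mat ?N ?N" by (simp add: wmat_carrier)
  define r where "r = (\<lambda>e::nat \<Rightarrow> complex. restrict (\<lambda>j. e (hinv \<tau> j)) {..<n})"
  have bij: "bij_betw r ?E ?E"
  proof (rule bij_betwI[where g = "\<lambda>e. restrict (\<lambda>j. e (\<tau> j)) {..<n}"])
    show "r \<in> ?E \<rightarrow> ?E" using perm_inv_lt[OF p] by (auto simp: r_def)
    show "(\<lambda>e. restrict (\<lambda>j. e (\<tau> j)) {..<n}) \<in> ?E \<rightarrow> ?E" using perm_lt[OF p] by auto
    show "restrict (\<lambda>j. r e (\<tau> j)) {..<n} = e" if "e \<in> ?E" for e
      using that perm_lt[OF p] by (auto simp: r_def permutes_inverses[OF p] fun_eq_iff PiE_def extensional_def)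
    show "r (restrict (\<lambda>j. e (\<tau> j)) {..<n}) = e" if "e \<in> ?E" for e
      using that perm_inv_lt[OF p] by (auto simp: r_def permutes_inverses[OF p] fun_eq_iff PiE_def extensional_def)
  qed
  have "2 ^ n * GT k n Mz T = (\<Sum>e\<in>?E. (\<Prod>j\<in>T. e j) * det (1\<^sub>m ?N - wmat k n (dmat k e) * Mz))"
    by (rule GT_avg[OF cMz T, symmetric])
  also have "\<dots> = (\<Sum>e\<in>?E. (\<Prod>j\<in>\<tau> ` T. r e j) * det (1\<^sub>m ?N - wmat k n (dmat k (r e)) * wmat k n x))"
  proof (rule sum.cong[OF refl])
    fix e assume e: "e \<in> ?E"
    have e1: "\<And>j. j < n \<Longrightarrow> e j \<in> {1, -1}" using e by auto
    have "(\<Prod>j\<in>\<tau> ` T. r e j) = (\<Prod>j\<in>T. r e (\<tau> j))"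
      by (simp add: prod.reindex[OF permutes_inj_on[OF p]])
    also have "\<dots> = (\<Prod>j\<in>T. e j)"
      using T perm_lt[OF p] by (intro prod.cong refl) (auto simp: r_def permutes_inverses[OF p])
    finally have A: "(\<Prod>j\<in>\<tau> ` T. r e j) = (\<Prod>j\<in>T. e j)" .
    have B: "wmat k n (dmat k (r e)) = wmat k n (dmat k (\<lambda>j. e (hinv (snd y) j)))"
      by (rule wmat_dmat_cong) (simp add: r_def \<tau>_def)
    show "(\<Prod>j\<in>T. e j) * det (1\<^sub>m ?N - wmat k n (dmat k e) * Mz) =
      (\<Prod>j\<in>\<tau> ` T. r e j) * det (1\<^sub>m ?N - wmat k n (dmat k (r e)) * wmat k n x)"
      unfolding A B Mz_def using det_conj[OF G x y e1] by simp
  qed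
  also have "\<dots> = (\<Sum>e\<in>?E. (\<Prod>j\<in>\<tau> ` T. e j) * det (1\<^sub>m ?N - wmat k n (dmat k e) * wmat k n x))"
    by (rule sum.reindex_bij_betw[OF bij])
  also have "\<dots> = 2 ^ n * GT k n (wmat k n x) (\<tau> ` T)"
    by (rule GT_avg[OF cMx TT])
  finally show ?thesis unfolding Mz_def \<tau>_def by simp
qed

section \<open>Signs of restricted permutations\<close>

lemma restrict_perm_eq: "restrict_perm \<sigma> U = restrict_id \<sigma> U"
  unfolding restrict_perm_def restrict_id_def by simp

definition inv_set :: "(nat \<Rightarrow> nat) \<Rightarrow> nat \<Rightarrow> nat set \<Rightarrow> bool" where
  "inv_set \<sigma> n U \<longleftrightarrow> U \<subseteq> {..<n} \<and> \<sigma> ` U = U"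

lemma bij_inv_set:
  assumes p: "\<sigma> permutes {..<n}" and U: "inv_set \<sigma> n U"
  shows "bij_betw \<sigma> U U"
  using U permutes_inj_on[OF p] unfolding inv_set_def bij_betw_def by auto

lemma rp_permutes:
  assumes p: "\<sigma> permutes {..<n}" and U: "inv_set \<sigma> n U"
  shows "restrict_perm \<sigma> U permutes U"
  unfolding restrict_perm_eq by (rule permutes_restrict_id[OF bij_inv_set[OF p U]])

lemma inv_set_fin: "inv_set \<sigma> n U \<Longrightarrow> finite U"
  unfolding inv_set_def using finite_subset by blast

lemma rp_permutation:
  assumes p: "\<sigma> permutes {..<n}" and U: "inv_set \<sigma> n U"
  shows "permutation (restrict_perm \<sigma> U)"
  using rp_permutes[OF p U] inv_set_fin[OF U] permutes_imp_permutation by blast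

lemma inv_set_diff:
  assumes p: "\<sigma> permutes {..<n}" and A: "inv_set \<sigma> n A" and B: "inv_set \<sigma> n B"
  shows "inv_set \<sigma> n (A - B)" "inv_set \<sigma> n (A \<inter> B)" "inv_set \<sigma> n (A \<union> B)"
proof -
  have inj: "inj \<sigma>" using p permutes_inj by blast
  show "inv_set \<sigma> n (A - B)" using A B image_set_diff[OF inj, of A B] unfolding inv_set_def by auto
  show "inv_set \<sigma> n (A \<inter> B)" using A B image_Int[OF inj, of A B] unfolding inv_set_def by auto
  show "inv_set \<sigma> n (A \<union> B)" using A B unfolding inv_set_def by (auto simp: image_Un)
qed

lemma rp_union:
  assumes A: "inv_set \<sigma> n A" and B: "inv_set \<sigma> n B" and d: "A \<inter> B = {}"
  shows "restrict_perm \<sigma> (A \<union> B) = restrict_perm \<sigma> A \<circ> restrict_perm \<sigma> B"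
proof
  fix x
  have sB: "x \<in> B \<Longrightarrow> \<sigma> x \<in> B" using B unfolding inv_set_def by auto
  show "restrict_perm \<sigma> (A \<union> B) x = (restrict_perm \<sigma> A \<circ> restrict_perm \<sigma> B) x"
    using sB d by (auto simp: restrict_perm_def)
qed

definition kappa :: "(nat \<Rightarrow> nat) \<Rightarrow> nat set \<Rightarrow> int" where
  "kappa \<sigma> U = (-1) ^ card U * sign (restrict_perm \<sigma> U)"

lemma kappa_union:
  assumes p: "\<sigma> permutes {..<n}" and A: "inv_set \<sigma> n A" and B: "inv_set \<sigma> n B" and d: "A \<inter> B = {}"
  shows "kappa \<sigma> (A \<union> B) = kappa \<sigma> A * kappa \<sigma> B"
proof -
  have "card (A \<union> B) = card A + card B"
    using inv_set_fin[OF A] inv_set_fin[OF B] d by (simp add: card_Un_disjoint)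
  moreover have "sign (restrict_perm \<sigma> (A \<union> B)) = sign (restrict_perm \<sigma> A) * sign (restrict_perm \<sigma> B)"
    unfolding rp_union[OF A B d] by (rule sign_compose[OF rp_permutation[OF p A] rp_permutation[OF p B]])
  ultimately show ?thesis unfolding kappa_def by (simp add: power_add)
qed

lemma kappa_sq: "kappa \<sigma> A * kappa \<sigma> A = 1"
  unfolding kappa_def by (simp add: algebra_simps power_mult_distrib[symmetric] power_add[symmetric])

lemma kappa_empty: "kappa \<sigma> {} = 1"
  unfolding kappa_def restrict_perm_def by (simp add: id_def[symmetric])

lemma kappa_symdiff:
  assumes p: "\<sigma> permutes {..<n}" and A: "inv_set \<sigma> n A" and B: "inv_set \<sigma> n B"
  shows "kappa \<sigma> A * kappa \<sigma> B = kappa \<sigma> ((A - B) \<union> (B - A))"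
proof -
  note I = inv_set_diff[OF p]
  have AB: "inv_set \<sigma> n (A - B)" "inv_set \<sigma> n (A \<inter> B)" "inv_set \<sigma> n (B - A)" using I A B by auto
  have "kappa \<sigma> ((A - B) \<union> (A \<inter> B)) = kappa \<sigma> (A - B) * kappa \<sigma> (A \<inter> B)"
    by (rule kappa_union[OF p AB(1) AB(2)]) blast
  moreover have "(A - B) \<union> (A \<inter> B) = A" by blast
  ultimately have "kappa \<sigma> A = kappa \<sigma> (A - B) * kappa \<sigma> (A \<inter> B)" by simp
  have "kappa \<sigma> ((B - A) \<union> (A \<inter> B)) = kappa \<sigma> (B - A) * kappa \<sigma> (A \<inter> B)"
    by (rule kappa_union[OF p AB(3) AB(2)]) blast
  moreover have "(B - A) \<union> (A \<inter> B) = B" by blast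
  ultimately have "kappa \<sigma> B = kappa \<sigma> (B - A) * kappa \<sigma> (A \<inter> B)" by simp
  note this \<open>kappa \<sigma> A = _\<close>
  moreover have "kappa \<sigma> ((A - B) \<union> (B - A)) = kappa \<sigma> (A - B) * kappa \<sigma> (B - A)"
    by (rule kappa_union[OF p AB(1) AB(3)]) auto
  ultimately show ?thesis using kappa_sq[of \<sigma> "A \<inter> B"] by (simp add: algebra_simps)
qed

lemma inv_set_level:
  fixes d :: "nat \<Rightarrow> nat"
  assumes p: "\<sigma> permutes {..<n}" and d: "\<And>j. j < n \<Longrightarrow> d (\<sigma> j) = d j"
  shows "inv_set \<sigma> n {j. j < n \<and> P (d j)}"
proof -
  have "\<sigma> ` {j. j < n \<and> P (d j)} \<subseteq> {j. j < n \<and> P (d j)}" using perm_lt[OF p] d by auto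
  moreover have "finite {j. j < n \<and> P (d j)}" by simp
  moreover have "inj_on \<sigma> {j. j < n \<and> P (d j)}" using permutes_inj_on[OF p] .
  ultimately have "\<sigma> ` {j. j < n \<and> P (d j)} = {j. j < n \<and> P (d j)}" by (intro endo_inj_surj)
  then show ?thesis unfolding inv_set_def by auto
qed

lemma kappa_levels:
  fixes d :: "nat \<Rightarrow> nat" and K :: nat
  assumes p: "\<sigma> permutes {..<n}" and d: "\<And>j. j < n \<Longrightarrow> d (\<sigma> j) = d j"
  shows "(\<Prod>r<K. kappa \<sigma> {j. j < n \<and> r < d j}) = kappa \<sigma> {j. j < n \<and> odd (min (d j) K)}"
proof (induction K)
  case 0
  then show ?case by (simp add: kappa_empty)
next
  case (Suc K)
  let ?A = "{j. j < n \<and> odd (min (d j) K)}"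
  let ?B = "{j. j < n \<and> K < d j}"
  have A: "inv_set \<sigma> n ?A" by (rule inv_set_level[of \<sigma> n d "\<lambda>x. odd (min x K)", OF p d])
  have B: "inv_set \<sigma> n ?B" by (rule inv_set_level[of \<sigma> n d "\<lambda>x. K < x", OF p d])
  have pt: "\<And>x::nat. odd (min x (Suc K)) = (odd (min x K) \<noteq> (K < x))"
  proof -
    fix x :: nat
    show "odd (min x (Suc K)) = (odd (min x K) \<noteq> (K < x))"
    proof (cases "x \<le> K")
      case True then show ?thesis by (simp add: min_def)
    next
      case False then have "min x (Suc K) = Suc K" "min x K = K" by auto
      then show ?thesis using False by simp
    qed
  qed
  have eq: "(?A - ?B) \<union> (?B - ?A) = {j. j < n \<and> odd (min (d j) (Suc K))}"
    using pt by auto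
  show ?case using Suc kappa_symdiff[OF p A B] eq by simp
qed

lemma card_levels:
  fixes d :: "nat \<Rightarrow> nat"
  assumes "\<And>j. j < n \<Longrightarrow> d j \<le> k"
  shows "(\<Sum>j<n. d j) = (\<Sum>r<k. card {j. j < n \<and> r < d j})"
proof -
  have "(\<Sum>j<n. d j) = (\<Sum>j<n. \<Sum>r<k. if r < d j then 1 else 0)"
  proof (rule sum.cong[OF refl])
    fix j assume "j \<in> {..<n}"
    then have "d j \<le> k" using assms by auto
    then have "{r. r < k \<and> r < d j} = {..<d j}" by auto
    then show "d j = (\<Sum>r<k. if r < d j then 1 else 0)"
      by (simp add: sum.If_cases lessThan_def Collect_conj_eq[symmetric])
  qed
  also have "\<dots> = (\<Sum>r<k. \<Sum>j<n. if r < d j then 1 else 0)" by (rule sum.swap)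
  also have "\<dots> = (\<Sum>r<k. card {j. j < n \<and> r < d j})"
  proof (rule sum.cong[OF refl])
    fix r
    have "{j. j < n \<and> r < d j} = {..<n} \<inter> {j. r < d j}" by auto
    then show "(\<Sum>j<n. if r < d j then 1 else 0) = card {j. j < n \<and> r < d j}"
      by (simp add: sum.If_cases)
  qed
  finally show ?thesis .
qed

lemma kappa_total:
  fixes d :: "nat \<Rightarrow> nat"
  assumes p: "\<sigma> permutes {..<n}" and d: "\<And>j. j < n \<Longrightarrow> d (\<sigma> j) = d j" and dk: "\<And>j. j < n \<Longrightarrow> d j \<le> k"
  shows "(-1) ^ (\<Sum>j<n. d j) * (\<Prod>r<k. sign (restrict_perm \<sigma> {j. j < n \<and> r < d j}))
       = kappa \<sigma> {j. j < n \<and> odd (d j)}"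
proof -
  have "(-1::int) ^ (\<Sum>j<n. d j) * (\<Prod>r<k. sign (restrict_perm \<sigma> {j. j < n \<and> r < d j}))
      = (\<Prod>r<k. (-1) ^ card {j. j < n \<and> r < d j}) * (\<Prod>r<k. sign (restrict_perm \<sigma> {j. j < n \<and> r < d j}))"
    using card_levels[OF dk] by (simp only: power_sum)
  also have "\<dots> = (\<Prod>r<k. kappa \<sigma> {j. j < n \<and> r < d j})"
    unfolding kappa_def prod.distrib by simp
  also have "\<dots> = kappa \<sigma> {j. j < n \<and> odd (min (d j) k)}" by (rule kappa_levels[of \<sigma> n d k, OF p d])
  also have "{j. j < n \<and> odd (min (d j) k)} = {j. j < n \<and> odd (d j)}"
    using dk by (auto simp: min_def)
  finally show ?thesis .
qed

section \<open>The level decomposition of the block shift\<close>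

lemma sign_inv_restrict:
  assumes p: "\<sigma> permutes {..<n}" and U: "inv_set \<sigma> n U"
  shows "restrict_id (hinv \<sigma>) U permutes U" "sign (restrict_id (hinv \<sigma>) U) = sign (restrict_perm \<sigma> U)"
proof -
  have b: "bij_betw \<sigma> U U" by (rule bij_inv_set[OF p U])
  have b': "bij_betw (hinv \<sigma>) U U"
  proof -
    have "bij_betw (inv_into U \<sigma>) U U" by (rule bij_betw_inv_into[OF b])
    moreover have "\<And>x. x \<in> U \<Longrightarrow> inv_into U \<sigma> x = hinv \<sigma> x"
    proof -
      fix x assume x: "x \<in> U"
      then obtain y where y: "y \<in> U" "x = \<sigma> y" using b unfolding bij_betw_def by auto
      then show "inv_into U \<sigma> x = hinv \<sigma> x"
        using b permutes_inverses(2)[OF p] by (simp add: bij_betw_def inv_into_f_f)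
    qed
    ultimately show ?thesis by (rule bij_betw_cong[THEN iffD1, rotated])
  qed
  show q: "restrict_id (hinv \<sigma>) U permutes U" by (rule permutes_restrict_id[OF b'])
  have fin: "finite U" by (rule inv_set_fin[OF U])
  have comp: "restrict_perm \<sigma> U \<circ> restrict_id (hinv \<sigma>) U = id"
  proof
    fix x show "(restrict_perm \<sigma> U \<circ> restrict_id (hinv \<sigma>) U) x = id x"
      using b' permutes_inverses(1)[OF p] by (auto simp: restrict_perm_def restrict_id_def bij_betw_def)
  qed
  have "sign (restrict_perm \<sigma> U) * sign (restrict_id (hinv \<sigma>) U) = 1"
    using sign_compose[OF rp_permutation[OF p U] permutes_imp_permutation[OF fin q]] comp by simp
  then show "sign (restrict_id (hinv \<sigma>) U) = sign (restrict_perm \<sigma> U)"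
    by (auto simp: sign_def split: if_splits)
qed

definition shiftK :: "(nat \<Rightarrow> nat) \<Rightarrow> nat \<Rightarrow> (nat \<Rightarrow> nat) \<Rightarrow> nat \<Rightarrow> nat \<times> nat \<Rightarrow> nat \<times> nat" where
  "shiftK \<sigma> n d K = restrict_id (\<lambda>x. (hinv \<sigma> (fst x), snd x)) {x. fst x < n \<and> snd x < d (fst x) \<and> snd x < K}"

lemma shiftK:
  assumes p: "\<sigma> permutes {..<n}" and d: "\<And>j. j < n \<Longrightarrow> d (\<sigma> j) = d j"
  shows "shiftK \<sigma> n d K permutes {x. fst x < n \<and> snd x < d (fst x) \<and> snd x < K}
      \<and> sign (shiftK \<sigma> n d K) = (\<Prod>r<K. sign (restrict_perm \<sigma> {j. j < n \<and> r < d j}))"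
proof (induction K)
  case 0
  have e: "shiftK \<sigma> n d 0 = id" by (auto simp: shiftK_def restrict_id_def)
  show ?case unfolding e by (intro conjI permutes_id) simp
next
  case (Suc K)
  let ?U = "{j. j < n \<and> K < d j}"
  have U: "inv_set \<sigma> n ?U" by (rule inv_set_level[of \<sigma> n d "\<lambda>x. K < x", OF p d])
  let ?lam = "map_permutation ?U (\<lambda>j. (j, K)) (restrict_id (hinv \<sigma>) ?U)"
  have inj: "inj_on (\<lambda>j. (j, K)) ?U" by (auto simp: inj_on_def)
  have q: "restrict_id (hinv \<sigma>) ?U permutes ?U" using sign_inv_restrict[OF p U] by simp
  have lamp: "?lam permutes (\<lambda>j. (j, K)) ` ?U"
    by (rule map_permutation_permutes[OF _ q]) (simp add: bij_betw_def inj)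
  have eq: "shiftK \<sigma> n d (Suc K) = ?lam \<circ> shiftK \<sigma> n d K"
  proof
    fix x :: "nat \<times> nat"
    obtain j r where x: "x = (j, r)" by (cases x)
    show "shiftK \<sigma> n d (Suc K) x = (?lam \<circ> shiftK \<sigma> n d K) x"
    proof (cases "j < n \<and> r < d j \<and> r < K")
      case True
      then have "shiftK \<sigma> n d K x = (hinv \<sigma> j, r)" by (simp add: shiftK_def x)
      moreover have "?lam (hinv \<sigma> j, r) = (hinv \<sigma> j, r)"
        using True by (auto simp: map_permutation_def restrict_id_def)
      ultimately show ?thesis using True by (simp add: shiftK_def x)
    next
      case False
      then have s: "shiftK \<sigma> n d K x = x" by (auto simp: shiftK_def x)
      show ?thesis
      proof (cases "j < n \<and> K < d j \<and> r = K")
        case True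
        have "?lam (j, K) = (hinv \<sigma> j, K)"
          using map_permutation_apply[OF inj, of j "restrict_id (hinv \<sigma>) ?U"] True by simp
        then show ?thesis using True s by (simp add: shiftK_def x)
      next
        case False2: False
        have "x \<notin> (\<lambda>j. (j, K)) ` ?U" using False2 x by auto
        then have "?lam x = x" by (rule permutes_not_in[OF lamp])
        moreover have "shiftK \<sigma> n d (Suc K) x = x" using False False2 by (auto simp: shiftK_def x)
        ultimately show ?thesis using s by simp
      qed
    qed
  qed
  have Kp: "shiftK \<sigma> n d K permutes {x. fst x < n \<and> snd x < d (fst x) \<and> snd x < K}" using Suc by simp
  have fin1: "finite {x. fst x < n \<and> snd x < d (fst x) \<and> snd x < K}"
    by (rule finite_subset[of _ "{..<n} \<times> {..<K}"]) auto
  have fin2: "finite ((\<lambda>j. (j, K)) ` ?U)" by simp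
  have perm1: "permutation (shiftK \<sigma> n d K)" using Kp fin1 permutes_imp_permutation by blast
  have perm2: "permutation ?lam" using lamp fin2 permutes_imp_permutation by blast
  have "sign ?lam = sign (restrict_id (hinv \<sigma>) ?U)"
    by (rule sign_map_permutation[OF inj q]) simp
  also have "\<dots> = sign (restrict_perm \<sigma> ?U)" using sign_inv_restrict[OF p U] by simp
  finally have sl: "sign ?lam = sign (restrict_perm \<sigma> ?U)" .
  have "sign (shiftK \<sigma> n d (Suc K)) = (\<Prod>r<Suc K. sign (restrict_perm \<sigma> {j. j < n \<and> r < d j}))"
    unfolding eq sign_compose[OF perm2 perm1] sl using Suc by (simp add: mult.commute)
  moreover have "shiftK \<sigma> n d (Suc K) permutes {x. fst x < n \<and> snd x < d (fst x) \<and> snd x < Suc K}"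
  proof -
    have a: "?lam permutes {x. fst x < n \<and> snd x < d (fst x) \<and> snd x < Suc K}"
      by (rule permutes_subset[OF lamp]) auto
    have b: "shiftK \<sigma> n d K permutes {x. fst x < n \<and> snd x < d (fst x) \<and> snd x < Suc K}"
      by (rule permutes_subset[OF Kp]) auto
    show ?thesis unfolding eq by (rule permutes_compose[OF b a])
  qed
  ultimately show ?case by simp
qed

section \<open>Block-diagonal permutations\<close>

definition bdiag :: "nat set \<Rightarrow> (nat \<Rightarrow> nat) \<Rightarrow> (nat \<Rightarrow> nat \<Rightarrow> nat) \<Rightarrow> nat \<times> nat \<Rightarrow> nat \<times> nat" where
  "bdiag J d P = restrict_id (\<lambda>x. (fst x, P (fst x) (snd x))) (Sigma J (\<lambda>j. {0..<d j}))"

lemma bdiag: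
  assumes "finite J" and "\<And>j. j \<in> J \<Longrightarrow> P j permutes {0..<d j}"
  shows "bdiag J d P permutes Sigma J (\<lambda>j. {0..<d j}) \<and> sign (bdiag J d P) = (\<Prod>j\<in>J. sign (P j))"
  using assms
proof (induction J rule: finite_induct)
  case empty
  have e: "bdiag {} d P = id" by (auto simp: bdiag_def restrict_id_def)
  show ?case unfolding e by (intro conjI permutes_id) simp
next
  case (insert j0 J)
  let ?lam = "map_permutation {0..<d j0} (\<lambda>r. (j0, r)) (P j0)"
  have inj: "inj_on (\<lambda>r. (j0, r)) {0..<d j0}" by (auto simp: inj_on_def)
  have pj0: "P j0 permutes {0..<d j0}" using insert by simp
  have lamp: "?lam permutes (\<lambda>r. (j0, r)) ` {0..<d j0}"
    by (rule map_permutation_permutes[OF _ pj0]) (simp add: bij_betw_def inj)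
  have IH: "bdiag J d P permutes Sigma J (\<lambda>j. {0..<d j}) \<and> sign (bdiag J d P) = (\<Prod>j\<in>J. sign (P j))"
    using insert by simp
  have eq: "bdiag (insert j0 J) d P = ?lam \<circ> bdiag J d P"
  proof
    fix x :: "nat \<times> nat"
    obtain j r where x: "x = (j, r)" by (cases x)
    show "bdiag (insert j0 J) d P x = (?lam \<circ> bdiag J d P) x"
    proof (cases "j \<in> J \<and> r < d j")
      case True
      then have "j \<noteq> j0" using insert by auto
      then have "?lam (j, P j r) = (j, P j r)" by (auto simp: map_permutation_def restrict_id_def)
      then show ?thesis using True by (simp add: bdiag_def x)
    next
      case False
      then have s: "bdiag J d P x = x" by (auto simp: bdiag_def x)
      show ?thesis
      proof (cases "j = j0 \<and> r < d j0")
        case True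
        have "?lam (j0, r) = (j0, P j0 r)"
          using map_permutation_apply[OF inj, of r "P j0"] True by simp
        then show ?thesis using True s by (simp add: bdiag_def x)
      next
        case False2: False
        have "x \<notin> (\<lambda>r. (j0, r)) ` {0..<d j0}" using False2 x by auto
        then have "?lam x = x" by (rule permutes_not_in[OF lamp])
        moreover have "bdiag (insert j0 J) d P x = x" using False False2 by (auto simp: bdiag_def x)
        ultimately show ?thesis using s by simp
      qed
    qed
  qed
  have fin1: "finite (Sigma J (\<lambda>j. {0..<d j}))" using insert by auto
  have perm1: "permutation (bdiag J d P)" using IH fin1 permutes_imp_permutation by blast
  have perm2: "permutation ?lam" using lamp permutes_imp_permutation by blast
  have sl: "sign ?lam = sign (P j0)" by (rule sign_map_permutation[OF inj pj0]) simp
  have "sign (bdiag (insert j0 J) d P) = (\<Prod>j\<in>insert j0 J. sign (P j))"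
    unfolding eq sign_compose[OF perm2 perm1] sl using IH insert by simp
  moreover have "bdiag (insert j0 J) d P permutes Sigma (insert j0 J) (\<lambda>j. {0..<d j})"
  proof -
    have a: "?lam permutes Sigma (insert j0 J) (\<lambda>j. {0..<d j})"
      by (rule permutes_subset[OF lamp]) auto
    have b: "bdiag J d P permutes Sigma (insert j0 J) (\<lambda>j. {0..<d j})"
      by (rule permutes_subset[OF conjunct1[OF IH]]) auto
    show ?thesis unfolding eq by (rule permutes_compose[OF b a])
  qed
  ultimately show ?case by simp
qed

definition ordb :: "nat \<Rightarrow> nat set \<Rightarrow> nat \<Rightarrow> nat \<Rightarrow> nat" where
  "ordb k S j r = sorted_list_of_set (blk k S j) ! r"

definition dd :: "nat \<Rightarrow> nat set \<Rightarrow> nat \<Rightarrow> nat" where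
  "dd k S j = card (blk k S j)"

definition DD :: "nat \<Rightarrow> nat \<Rightarrow> nat set \<Rightarrow> (nat \<times> nat) set" where
  "DD k n S = Sigma {..<n} (\<lambda>j. {0..<dd k S j})"

definition ee :: "nat \<Rightarrow> nat set \<Rightarrow> nat \<times> nat \<Rightarrow> nat" where
  "ee k S x = fst x * k + ordb k S (fst x) (snd x)"

lemma blk_sub: "blk k S j \<subseteq> {0..<k}" unfolding blk_def by (intro subsetI) simp

lemma blk_fin: "finite (blk k S j)" by (rule finite_subset[OF blk_sub]) simp

lemma dd_le: "dd k S j \<le> k"
  unfolding dd_def using card_mono[OF _ blk_sub] by fastforce

lemma ordb_bij: "bij_betw (ordb k S j) {0..<dd k S j} (blk k S j)"
  unfolding ordb_def dd_def by (rule bij_sorted_nth[OF blk_fin])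

lemma ordb_in: "r < dd k S j \<Longrightarrow> ordb k S j r \<in> blk k S j"
  using ordb_bij[of k S j] unfolding bij_betw_def by auto

lemma ordb_lt: "r < dd k S j \<Longrightarrow> ordb k S j r < k"
  using ordb_in blk_sub by fastforce

lemma ee_in: "x \<in> DD k n S \<Longrightarrow> ee k S x \<in> S"
  using ordb_in[of "snd x" k S "fst x"] unfolding DD_def ee_def blk_def by auto

lemma ee_div: "r < dd k S j \<Longrightarrow> ee k S (j, r) div k = j"
  using ordb_lt[of r k S j] by (simp add: ee_def)

lemma ee_mod: "r < dd k S j \<Longrightarrow> ee k S (j, r) mod k = ordb k S j r"
  using ordb_lt[of r k S j] by (simp add: ee_def)

lemma ee_bij:
  assumes S: "S \<subseteq> {0..<k*n}"
  shows "bij_betw (ee k S) (DD k n S) S"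
proof (rule bij_betwI[where g = "\<lambda>i. (i div k, inv_into {0..<dd k S (i div k)} (ordb k S (i div k)) (i mod k))"])
  show "ee k S \<in> DD k n S \<rightarrow> S" using ee_in by blast
  show "(\<lambda>i. (i div k, inv_into {0..<dd k S (i div k)} (ordb k S (i div k)) (i mod k))) \<in> S \<rightarrow> DD k n S"
  proof
    fix i assume i: "i \<in> S"
    then have ik: "i < k*n" using S by auto
    then have kpos: "k > 0" by (cases k) auto
    have "i mod k \<in> blk k S (i div k)" using i kpos by (simp add: blk_def mult.commute)
    then have "inv_into {0..<dd k S (i div k)} (ordb k S (i div k)) (i mod k) \<in> {0..<dd k S (i div k)}"
      using bij_betw_inv_into[OF ordb_bij[of k S "i div k"]] by (auto simp: bij_betw_def)
    then show "(i div k, inv_into {0..<dd k S (i div k)} (ordb k S (i div k)) (i mod k)) \<in> DD k n S"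
      using div_lt_n[OF ik] by (simp add: DD_def)
  qed
  show "(ee k S x div k, inv_into {0..<dd k S (ee k S x div k)} (ordb k S (ee k S x div k)) (ee k S x mod k)) = x"
    if xD: "x \<in> DD k n S" for x
  proof -
    obtain j r where x: "x = (j, r)" and r: "r < dd k S j" using xD by (cases x) (auto simp: DD_def)
    have inj: "inj_on (ordb k S j) {0..<dd k S j}" using ordb_bij bij_betw_imp_inj_on by blast
    show ?thesis using r by (simp add: x ee_div ee_mod inv_into_f_f[OF inj])
  qed
  show "ee k S (i div k, inv_into {0..<dd k S (i div k)} (ordb k S (i div k)) (i mod k)) = i" if "i \<in> S" for i
  proof -
    have ik: "i < k*n" using S that by auto
    then have kpos: "k > 0" by (cases k) auto
    have "i mod k \<in> blk k S (i div k)" using that kpos by (simp add: blk_def mult.commute)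
    then have "i mod k \<in> ordb k S (i div k) ` {0..<dd k S (i div k)}"
      using ordb_bij[of k S "i div k"] by (simp add: bij_betw_def)
    then have "ordb k S (i div k) (inv_into {0..<dd k S (i div k)} (ordb k S (i div k)) (i mod k)) = i mod k"
      by (rule f_inv_into_f)
    then show ?thesis by (simp add: ee_def)
  qed
qed

lemma M_entry:
  assumes S: "S \<subseteq> {0..<k*n}" and x: "x \<in> DD k n S" and y: "y \<in> DD k n S"
  shows "wmat k n w $$ (ee k S x, ee k S y) =
    (if fst y = hinv (snd w) (fst x) then fst w (fst x) $$ (ordb k S (fst x) (snd x), ordb k S (fst y) (snd y)) else 0)"
proof -
  obtain j r where xj: "x = (j, r)" and r: "r < dd k S j" using x by (cases x) (auto simp: DD_def)
  obtain j' r' where yj: "y = (j', r')" and r': "r' < dd k S j'" using y by (cases y) (auto simp: DD_def)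
  have "ee k S x < k*n" "ee k S y < k*n" using ee_in[OF x] ee_in[OF y] S by auto
  moreover note ee_div[OF r] ee_div[OF r'] ee_mod[OF r] ee_mod[OF r']
  ultimately show ?thesis by (simp only: wmat_index xj yj fst_conv snd_conv)
qed

lemma pdet_DD:
  assumes S: "S \<subseteq> {0..<k*n}"
  shows "pdet M S = (\<Sum>q | q permutes DD k n S. of_int (sign q) * (\<Prod>x\<in>DD k n S. M $$ (ee k S x, ee k S (q x))))"
  unfolding pdet_def
  by (rule sum_perm_reindex[OF ee_bij[OF S], of "\<lambda>i j. M $$ (i, j)"]) (simp add: DD_def)

lemma DD_fin: "finite (DD k n S)" by (simp add: DD_def)

lemma nonzero_BC:
  assumes S: "S \<subseteq> {0..<k*n}" and q: "q permutes DD k n S"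
    and nz: "(\<Prod>x\<in>DD k n S. wmat k n w $$ (ee k S x, ee k S (q x))) \<noteq> 0"
  shows "\<forall>x\<in>DD k n S. fst (q x) = hinv (snd w) (fst x)"
proof
  fix x assume x: "x \<in> DD k n S"
  have qx: "q x \<in> DD k n S" using x by (simp add: permutes_in_image[OF q])
  have "wmat k n w $$ (ee k S x, ee k S (q x)) \<noteq> 0" using nz x DD_fin by auto
  then show "fst (q x) = hinv (snd w) (fst x)" using M_entry[OF S x qx] by (auto split: if_splits)
qed

lemma pdet_unbalanced:
  assumes S: "S \<subseteq> {0..<k*n}" and ps: "snd w permutes {..<n}"
    and ub: "\<exists>j<n. dd k S j \<noteq> dd k S (hinv (snd w) j)"
  shows "pdet (wmat k n w) S = 0"
proof -
  let ?\<sigma> = "snd w"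
  let ?d = "dd k S"
  have "(\<Prod>x\<in>DD k n S. wmat k n w $$ (ee k S x, ee k S (q x))) = 0" if q: "q permutes DD k n S" for q
  proof (rule ccontr)
    assume nz: "(\<Prod>x\<in>DD k n S. wmat k n w $$ (ee k S x, ee k S (q x))) \<noteq> 0"
    have BC: "\<forall>x\<in>DD k n S. fst (q x) = hinv ?\<sigma> (fst x)" by (rule nonzero_BC[OF S q nz])
    have le: "?d j \<le> ?d (hinv ?\<sigma> j)" if j: "j < n" for j
    proof -
      have inj: "inj_on (\<lambda>r. snd (q (j, r))) {0..<?d j}"
      proof (rule inj_onI)
        fix r r' assume r: "r \<in> {0..<?d j}" and r': "r' \<in> {0..<?d j}" and eq: "snd (q (j, r)) = snd (q (j, r'))"
        have "(j, r) \<in> DD k n S" "(j, r') \<in> DD k n S" using r r' j by (auto simp: DD_def)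
        then have "q (j, r) = q (j, r')" using BC eq by (intro prod_eqI) auto
        then show "r = r'" using permutes_inj[OF q] by (auto dest: injD)
      qed
      have img: "(\<lambda>r. snd (q (j, r))) ` {0..<?d j} \<subseteq> {0..<?d (hinv ?\<sigma> j)}"
      proof
        fix y assume "y \<in> (\<lambda>r. snd (q (j, r))) ` {0..<?d j}"
        then obtain r where r: "r < ?d j" and y: "y = snd (q (j, r))" by auto
        have jr: "(j, r) \<in> DD k n S" using r j by (auto simp: DD_def)
        then have "q (j, r) \<in> DD k n S" by (simp add: permutes_in_image[OF q])
        moreover have "fst (q (j, r)) = hinv ?\<sigma> j" using BC jr by auto
        ultimately show "y \<in> {0..<?d (hinv ?\<sigma> j)}" using y by (cases "q (j, r)") (auto simp: DD_def)
      qed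
      have "card {0..<?d j} \<le> card {0..<?d (hinv ?\<sigma> j)}"
        by (rule card_inj_on_le[OF inj img]) simp
      then show ?thesis by simp
    qed
    obtain j0 where j0: "j0 < n" "?d j0 \<noteq> ?d (hinv ?\<sigma> j0)" using ub by blast
    have lt: "?d j0 < ?d (hinv ?\<sigma> j0)" using le[OF j0(1)] j0(2) by simp
    have "(\<Sum>j<n. ?d j) < (\<Sum>j<n. ?d (hinv ?\<sigma> j))"
      by (rule sum_strict_mono_ex1) (use le lt j0(1) in auto)
    moreover have "(\<Sum>j<n. ?d (hinv ?\<sigma> j)) = (\<Sum>j<n. ?d j)"
      using sum.permute[OF permutes_inv[OF ps], of ?d] by (simp add: comp_def)
    ultimately show False by simp
  qed
  then show ?thesis unfolding pdet_DD[OF S] by simp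
qed

lemma perm_from_inj:
  assumes "finite A" "inj_on f A" "f ` A \<subseteq> A" "\<And>x. x \<notin> A \<Longrightarrow> f x = x"
  shows "f permutes A"
proof (rule bij_imp_permutes)
  have "f ` A = A" by (rule endo_inj_surj[OF assms(1,3,2)])
  then show "bij_betw f A A" using assms(2) by (simp add: bij_betw_def)
qed (use assms(4) in auto)

lemma kmain:
  assumes S: "S \<subseteq> {0..<k*n}" and ps: "snd w permutes {..<n}"
    and bal: "\<And>j. j < n \<Longrightarrow> dd k S (hinv (snd w) j) = dd k S j"
  shows "(-1) ^ card S * pdet (wmat k n w) S =
    of_int (kappa (snd w) {j. j < n \<and> odd (dd k S j)}) *
    (\<Prod>j<n. wedge_entry (fst w j) (blk k S j) (blk k S (hinv (snd w) j)))"
proof -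
  define \<sigma> where "\<sigma> = snd w"
  define g where "g = fst w"
  define d where "d = dd k S"
  define D where "D = DD k n S"
  define M where "M = wmat k n w"
  have p: "\<sigma> permutes {..<n}" using ps \<sigma>_def by simp
  have bal': "\<And>j. j < n \<Longrightarrow> d (hinv \<sigma> j) = d j" using bal by (simp add: d_def \<sigma>_def)
  have dsig: "\<And>j. j < n \<Longrightarrow> d (\<sigma> j) = d j"
  proof -
    fix j assume j: "j < n"
    have "d (hinv \<sigma> (\<sigma> j)) = d (\<sigma> j)" using bal' perm_lt[OF p j] by blast
    then show "d (\<sigma> j) = d j" using permutes_inverses(2)[OF p] by simp
  qed
  have dk: "\<And>j. d j \<le> k" by (simp add: d_def dd_le)
  have Dset: "{x. fst x < n \<and> snd x < d (fst x) \<and> snd x < k} = D"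
    using dk by (auto simp: D_def DD_def d_def intro: less_le_trans)
  define shift where "shift = shiftK \<sigma> n d k"
  have sh: "shift permutes D" "sign shift = (\<Prod>r<k. sign (restrict_perm \<sigma> {j. j < n \<and> r < d j}))"
    using shiftK[of \<sigma> n d k, OF p dsig] Dset by (simp_all add: shift_def)
  have Dsig: "D = Sigma {..<n} (\<lambda>j. {0..<d j})" by (simp add: D_def DD_def d_def)
  have finD: "finite D" by (simp add: Dsig)
  define PP where "PP = PiE {..<n} (\<lambda>j. {p. p permutes {0..<d j}})"
  define Phi where "Phi = (\<lambda>P. shift \<circ> bdiag {..<n} d P)"
  have bd: "bdiag {..<n} d P permutes D \<and> sign (bdiag {..<n} d P) = (\<Prod>j<n. sign (P j))" if P: "P \<in> PP" for P
  proof -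
    have "\<And>j. j < n \<Longrightarrow> P j permutes {0..<d j}" using P by (auto simp: PP_def)
    then show ?thesis using bdiag[of "{..<n}" P d] by (simp add: Dsig)
  qed
  have Phi_app: "Phi P (j, r) = (hinv \<sigma> j, P j r)" if P: "P \<in> PP" and jr: "(j, r) \<in> D" for P j r
  proof -
    have j: "j < n" and r: "r < d j" using jr by (auto simp: Dsig)
    have Pj: "P j permutes {0..<d j}" using P j by (auto simp: PP_def)
    have Pr: "P j r < d j" using permutes_in_image[OF Pj, of r] r by simp
    have "bdiag {..<n} d P (j, r) = (j, P j r)" using j r by (simp add: bdiag_def)
    moreover have "shift (j, P j r) = (hinv \<sigma> j, P j r)"
      using j Pr dk[of j] by (simp add: shift_def shiftK_def)
    ultimately show ?thesis by (simp add: Phi_def)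
  qed
  have Phi_perm: "Phi P permutes D" if "P \<in> PP" for P
    unfolding Phi_def using bd[OF that] sh(1) by (intro permutes_compose) auto
  have Phi_sign: "sign (Phi P) = sign shift * (\<Prod>j<n. sign (P j))" if "P \<in> PP" for P
  proof -
    have a: "permutation shift" using sh(1) finD permutes_imp_permutation by blast
    have b: "permutation (bdiag {..<n} d P)" using bd[OF that] finD permutes_imp_permutation by blast
    show ?thesis unfolding Phi_def sign_compose[OF a b] using bd[OF that] by simp
  qed
  define BC where "BC = {q. q permutes D \<and> (\<forall>x\<in>D. fst (q x) = hinv \<sigma> (fst x))}"
  define Psi where "Psi = (\<lambda>q :: nat \<times> nat \<Rightarrow> nat \<times> nat. restrict (\<lambda>j r. if r < d j then snd (q (j, r)) else r) {..<n})"
  have bij: "bij_betw Phi PP BC"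
  proof (rule bij_betwI[where g = Psi])
    show "Phi \<in> PP \<rightarrow> BC"
    proof
      fix P assume P: "P \<in> PP"
      have "\<forall>x\<in>D. fst (Phi P x) = hinv \<sigma> (fst x)"
      proof
        fix x assume x: "x \<in> D"
        then obtain j r where "x = (j, r)" by (cases x)
        then show "fst (Phi P x) = hinv \<sigma> (fst x)" using Phi_app[OF P] x by simp
      qed
      then show "Phi P \<in> BC" using Phi_perm[OF P] by (simp add: BC_def)
    qed
    show "Psi \<in> BC \<rightarrow> PP"
    proof
      fix q assume q: "q \<in> BC"
      have qp: "q permutes D" and qbc: "\<forall>x\<in>D. fst (q x) = hinv \<sigma> (fst x)" using q by (auto simp: BC_def)
      have "(\<lambda>r. if r < d j then snd (q (j, r)) else r) permutes {0..<d j}" if j: "j < n" for j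
      proof (rule perm_from_inj)
        show "inj_on (\<lambda>r. if r < d j then snd (q (j, r)) else r) {0..<d j}"
        proof (rule inj_onI)
          fix r r' assume r: "r \<in> {0..<d j}" and r': "r' \<in> {0..<d j}"
            and eq: "(if r < d j then snd (q (j, r)) else r) = (if r' < d j then snd (q (j, r')) else r')"
          have "(j, r) \<in> D" "(j, r') \<in> D" using r r' j by (auto simp: Dsig)
          then have "q (j, r) = q (j, r')" using qbc eq r r' by (intro prod_eqI) auto
          then show "r = r'" using permutes_inj[OF qp] by (auto dest: injD)
        qed
        show "(\<lambda>r. if r < d j then snd (q (j, r)) else r) ` {0..<d j} \<subseteq> {0..<d j}"
        proof
          fix y assume "y \<in> (\<lambda>r. if r < d j then snd (q (j, r)) else r) ` {0..<d j}"
          then obtain r where r: "r < d j" and y: "y = snd (q (j, r))" by auto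
          have jr: "(j, r) \<in> D" using r j by (auto simp: Dsig)
          then have qin: "q (j, r) \<in> D" by (simp add: permutes_in_image[OF qp])
          have f: "fst (q (j, r)) = hinv \<sigma> j" using qbc jr by auto
          have "snd (q (j, r)) < d (hinv \<sigma> j)" using qin f by (cases "q (j, r)") (auto simp: Dsig)
          then show "y \<in> {0..<d j}" using y bal'[OF j] by simp
        qed
      qed auto
      then show "Psi q \<in> PP" by (auto simp: PP_def Psi_def)
    qed
    show "Psi (Phi P) = P" if P: "P \<in> PP" for P
    proof
      fix j
      show "Psi (Phi P) j = P j"
      proof (cases "j < n")
        case True
        have Pj: "P j permutes {0..<d j}" using P True by (auto simp: PP_def)
        show ?thesis
        proof
          fix r
          show "Psi (Phi P) j r = P j r"
          proof (cases "r < d j")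
            case True2: True
            have "(j, r) \<in> D" using True True2 by (simp add: Dsig)
            then show ?thesis using True True2 Phi_app[OF P] by (simp add: Psi_def)
          next
            case False
            then show ?thesis using True permutes_not_in[OF Pj, of r] by (simp add: Psi_def)
          qed
        qed
      next
        case False
        then show ?thesis using P by (simp add: Psi_def PP_def PiE_def extensional_def)
      qed
    qed
    show "Phi (Psi q) = q" if q: "q \<in> BC" for q
    proof
      fix x
      have qp: "q permutes D" and qbc: "\<forall>x\<in>D. fst (q x) = hinv \<sigma> (fst x)" using q by (auto simp: BC_def)
      have PsiP: "Psi q \<in> PP" using \<open>Psi \<in> BC \<rightarrow> PP\<close> q by blast
      show "Phi (Psi q) x = q x"
      proof (cases "x \<in> D")
        case True
        then obtain j r where x: "x = (j, r)" and j: "j < n" and r: "r < d j" by (cases x) (auto simp: Dsig)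
        have "Phi (Psi q) x = (hinv \<sigma> j, snd (q (j, r)))"
          using Phi_app[OF PsiP True[unfolded x]] j r by (simp add: x Psi_def)
        also have "\<dots> = q x" using qbc True x by (intro prod_eqI) auto
        finally show ?thesis .
      next
        case False
        have "Phi (Psi q) x = x" using Phi_perm[OF PsiP] False permutes_not_in by metis
        moreover have "q x = x" using qp False permutes_not_in by metis
        ultimately show ?thesis by simp
      qed
    qed
  qed
  define F where "F = (\<lambda>q. of_int (sign q) * (\<Prod>x\<in>D. M $$ (ee k S x, ee k S (q x))))"
  have "pdet M S = (\<Sum>q | q permutes D. F q)"
    unfolding pdet_DD[OF S] F_def D_def by simp
  also have "\<dots> = (\<Sum>q\<in>BC. F q)"
  proof (rule sum.mono_neutral_right)
    show "finite {q. q permutes D}" using finD by (rule finite_permutations)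
    show "BC \<subseteq> {q. q permutes D}" by (auto simp: BC_def)
    show "\<forall>q\<in>{q. q permutes D} - BC. F q = 0"
    proof
      fix q assume q: "q \<in> {q. q permutes D} - BC"
      then have qp: "q permutes D" and nbc: "\<not> (\<forall>x\<in>D. fst (q x) = hinv \<sigma> (fst x))" by (auto simp: BC_def)
      have "(\<Prod>x\<in>D. M $$ (ee k S x, ee k S (q x))) = 0"
        using nonzero_BC[OF S, of q w] qp nbc by (auto simp: D_def M_def \<sigma>_def)
      then show "F q = 0" by (simp add: F_def)
    qed
  qed
  also have "\<dots> = (\<Sum>P\<in>PP. F (Phi P))"
    by (rule sum.reindex_bij_betw[OF bij, symmetric])
  also have "\<dots> = (\<Sum>P\<in>PP. of_int (sign shift) * (\<Prod>j<n. of_int (sign (P j)) *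
        (\<Prod>r\<in>{0..<d j}. g j $$ (ordb k S j r, ordb k S (hinv \<sigma> j) (P j r)))))"
  proof (rule sum.cong[OF refl])
    fix P assume P: "P \<in> PP"
    have "(\<Prod>x\<in>D. M $$ (ee k S x, ee k S (Phi P x))) =
        (\<Prod>x\<in>D. g (fst x) $$ (ordb k S (fst x) (snd x), ordb k S (hinv \<sigma> (fst x)) (P (fst x) (snd x))))"
    proof (rule prod.cong[OF refl])
      fix x assume x: "x \<in> D"
      then obtain j r where xj: "x = (j, r)" by (cases x)
      have ph: "Phi P x = (hinv \<sigma> j, P j r)" using Phi_app[OF P] x xj by simp
      have phD: "Phi P x \<in> D" using Phi_perm[OF P] x by (simp add: permutes_in_image)
      show "M $$ (ee k S x, ee k S (Phi P x)) =
        g (fst x) $$ (ordb k S (fst x) (snd x), ordb k S (hinv \<sigma> (fst x)) (P (fst x) (snd x)))"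
        using M_entry[OF S, of x "Phi P x" w] x phD ph xj by (simp add: M_def g_def \<sigma>_def D_def)
    qed
    also have "\<dots> = (\<Prod>j<n. \<Prod>r\<in>{0..<d j}. g j $$ (ordb k S j r, ordb k S (hinv \<sigma> j) (P j r)))"
      unfolding Dsig by (subst prod.Sigma) (auto simp: case_prod_beta)
    finally have pr: "(\<Prod>x\<in>D. M $$ (ee k S x, ee k S (Phi P x))) =
        (\<Prod>j<n. \<Prod>r\<in>{0..<d j}. g j $$ (ordb k S j r, ordb k S (hinv \<sigma> j) (P j r)))" .
    show "F (Phi P) = of_int (sign shift) * (\<Prod>j<n. of_int (sign (P j)) *
        (\<Prod>r\<in>{0..<d j}. g j $$ (ordb k S j r, ordb k S (hinv \<sigma> j) (P j r))))"
      unfolding F_def pr Phi_sign[OF P] by (simp add: prod.distrib)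
  qed
  also have "\<dots> = of_int (sign shift) * (\<Prod>j<n. \<Sum>p | p permutes {0..<d j}. of_int (sign p) *
        (\<Prod>r\<in>{0..<d j}. g j $$ (ordb k S j r, ordb k S (hinv \<sigma> j) (p r))))"
    unfolding PP_def
    by (subst prod_sum_PiE) (auto simp: sum_distrib_left finite_permutations)
  also have "\<dots> = of_int (sign shift) * (\<Prod>j<n. wedge_entry (g j) (blk k S j) (blk k S (hinv \<sigma> j)))"
    by (simp add: wedge_entry_leibniz d_def dd_def ordb_def)
  finally have pd: "pdet M S = of_int (sign shift) * (\<Prod>j<n. wedge_entry (g j) (blk k S j) (blk k S (hinv \<sigma> j)))" .
  have cS: "card S = (\<Sum>j<n. d j)"
  proof -
    have "card S = card D" using bij_betw_same_card[OF ee_bij[OF S]] by (simp add: D_def)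
    also have "\<dots> = (\<Sum>j<n. d j)" unfolding Dsig by (subst card_SigmaI) auto
    finally show ?thesis .
  qed
  have "(-1::int) ^ card S * sign shift = kappa \<sigma> {j. j < n \<and> odd (d j)}"
    unfolding cS sh(2) by (rule kappa_total[of \<sigma> n d k, OF p dsig dk])
  then have "(-1::complex) ^ card S * of_int (sign shift) = of_int (kappa \<sigma> {j. j < n \<and> odd (d j)})"
    by (metis of_int_hom.hom_mult of_int_hom.hom_power of_int_hom.hom_one of_int_hom.hom_uminus)
  then show ?thesis unfolding pd[unfolded M_def] by (simp add: mult.assoc[symmetric] \<sigma>_def g_def d_def)
qed

lemma per_S:
  assumes S: "S \<subseteq> {0..<k*n}" and ps: "snd w permutes {..<n}"
  shows "(-1) ^ card (pat k n S) * of_int (sign (restrict_perm (snd w) (pat k n S))) *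
      (\<Prod>j<n. wedge_sum_rep (fst w j) (blk k S j) (blk k S (hinv (snd w) j)))
    = (-1) ^ card S * pdet (wmat k n w) S"
proof (cases "\<forall>j<n. dd k S (hinv (snd w) j) = dd k S j")
  case True
  have ws: "(\<Prod>j<n. wedge_sum_rep (fst w j) (blk k S j) (blk k S (hinv (snd w) j)))
      = (\<Prod>j<n. wedge_entry (fst w j) (blk k S j) (blk k S (hinv (snd w) j)))"
    using True by (intro prod.cong refl) (simp add: wedge_sum_rep_def dd_def)
  have pt: "{j. j < n \<and> odd (dd k S j)} = pat k n S" by (simp add: pat_def dd_def)
  have "(-1::complex) ^ card (pat k n S) * of_int (sign (restrict_perm (snd w) (pat k n S)))
      = of_int (kappa (snd w) (pat k n S))" by (simp add: kappa_def)
  moreover have "(-1) ^ card S * pdet (wmat k n w) S = of_int (kappa (snd w) (pat k n S)) *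
    (\<Prod>j<n. wedge_entry (fst w j) (blk k S j) (blk k S (hinv (snd w) j)))"
    using kmain[OF S ps] True pt by simp
  ultimately show ?thesis unfolding ws by simp
next
  case False
  then obtain j0 where j0: "j0 < n" "dd k S (hinv (snd w) j0) \<noteq> dd k S j0" by blast
  have "(\<Prod>j<n. wedge_sum_rep (fst w j) (blk k S j) (blk k S (hinv (snd w) j))) = 0"
    using j0 by (intro prod_zero) (auto simp: wedge_sum_rep_def dd_def intro!: bexI[of _ j0])
  moreover have "pdet (wmat k n w) S = 0"
    by (rule pdet_unbalanced[OF S ps]) (use j0 in auto)
  ultimately show ?thesis by simp
qed

lemma tc_merge:
  fixes f :: "nat \<Rightarrow> 'b \<Rightarrow> 'b \<Rightarrow> complex"
  assumes AB: "A \<inter> B = {}" and fA: "finite A" and fB: "finite B"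
    and sA: "\<And>j. j \<in> A \<Longrightarrow> s j \<in> A" and sB: "\<And>j. j \<in> B \<Longrightarrow> s j \<in> B"
  shows "(\<Sum>a\<in>A \<rightarrow>\<^sub>E X. \<Prod>j\<in>A. f j (a j) (a (s j))) * (\<Sum>b\<in>B \<rightarrow>\<^sub>E Y. \<Prod>j\<in>B. f j (b j) (b (s j)))
    = (\<Sum>c\<in>PiE (A \<union> B) (\<lambda>j. if j \<in> B then Y else X). \<Prod>j\<in>A \<union> B. f j (c j) (c (s j)))"
proof -
  let ?h = "\<lambda>(a, b). (\<lambda>x. if x \<in> A then a x else b x)"
  have bij: "bij_betw ?h ((A \<rightarrow>\<^sub>E X) \<times> (B \<rightarrow>\<^sub>E Y)) (PiE (A \<union> B) (\<lambda>j. if j \<in> B then Y else X))"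
  proof (rule bij_betwI[where g = "\<lambda>c. (restrict c A, restrict c B)"])
    show "?h \<in> (A \<rightarrow>\<^sub>E X) \<times> (B \<rightarrow>\<^sub>E Y) \<rightarrow> PiE (A \<union> B) (\<lambda>j. if j \<in> B then Y else X)"
      using AB by (auto simp: PiE_def extensional_def Pi_def)
    show "(\<lambda>c. (restrict c A, restrict c B)) \<in> PiE (A \<union> B) (\<lambda>j. if j \<in> B then Y else X) \<rightarrow> (A \<rightarrow>\<^sub>E X) \<times> (B \<rightarrow>\<^sub>E Y)"
      using AB by (auto simp: PiE_def Pi_def)
    show "(restrict (?h ab) A, restrict (?h ab) B) = ab" if "ab \<in> (A \<rightarrow>\<^sub>E X) \<times> (B \<rightarrow>\<^sub>E Y)" for ab
      using that AB by (cases ab) (auto simp: PiE_def extensional_def fun_eq_iff)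
    show "?h (restrict c A, restrict c B) = c" if "c \<in> PiE (A \<union> B) (\<lambda>j. if j \<in> B then Y else X)" for c
      using that by (auto simp: PiE_def extensional_def fun_eq_iff)
  qed
  have "(\<Sum>a\<in>A \<rightarrow>\<^sub>E X. \<Prod>j\<in>A. f j (a j) (a (s j))) * (\<Sum>b\<in>B \<rightarrow>\<^sub>E Y. \<Prod>j\<in>B. f j (b j) (b (s j)))
      = (\<Sum>ab\<in>(A \<rightarrow>\<^sub>E X) \<times> (B \<rightarrow>\<^sub>E Y). (\<Prod>j\<in>A. f j (fst ab j) (fst ab (s j))) * (\<Prod>j\<in>B. f j (snd ab j) (snd ab (s j))))"
    by (simp add: sum_product sum.cartesian_product case_prod_beta)
  also have "\<dots> = (\<Sum>ab\<in>(A \<rightarrow>\<^sub>E X) \<times> (B \<rightarrow>\<^sub>E Y). \<Prod>j\<in>A \<union> B. f j (?h ab j) (?h ab (s j)))"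
  proof (rule sum.cong[OF refl])
    fix ab
    have "(\<Prod>j\<in>A \<union> B. f j (?h ab j) (?h ab (s j))) = (\<Prod>j\<in>A. f j (?h ab j) (?h ab (s j))) * (\<Prod>j\<in>B. f j (?h ab j) (?h ab (s j)))"
      by (rule prod.union_disjoint[OF fA fB AB])
    also have "\<dots> = (\<Prod>j\<in>A. f j (fst ab j) (fst ab (s j))) * (\<Prod>j\<in>B. f j (snd ab j) (snd ab (s j)))"
    proof -
      have "(\<Prod>j\<in>A. f j (?h ab j) (?h ab (s j))) = (\<Prod>j\<in>A. f j (fst ab j) (fst ab (s j)))"
        using sA by (intro prod.cong refl) (auto simp: case_prod_beta)
      moreover have "(\<Prod>j\<in>B. f j (?h ab j) (?h ab (s j))) = (\<Prod>j\<in>B. f j (snd ab j) (snd ab (s j)))"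
        using sB AB by (intro prod.cong refl) (auto simp: case_prod_beta)
      ultimately show ?thesis by simp
    qed
    finally show "(\<Prod>j\<in>A. f j (fst ab j) (fst ab (s j))) * (\<Prod>j\<in>B. f j (snd ab j) (snd ab (s j)))
       = (\<Prod>j\<in>A \<union> B. f j (?h ab j) (?h ab (s j)))" by simp
  qed
  also have "\<dots> = (\<Sum>c\<in>PiE (A \<union> B) (\<lambda>j. if j \<in> B then Y else X). \<Prod>j\<in>A \<union> B. f j (c j) (c (s j)))"
    by (rule sum.reindex_bij_betw[OF bij])
  finally show ?thesis .
qed

definition Sof :: "nat \<Rightarrow> nat \<Rightarrow> (nat \<Rightarrow> nat set) \<Rightarrow> nat set" where
  "Sof k n a = {i\<in>{0..<k*n}. i mod k \<in> a (i div k)}"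

lemma blk_Sof:
  assumes j: "j < n" and a: "a j \<subseteq> {0..<k}"
  shows "blk k (Sof k n a) j = a j"
proof -
  have "r < k \<Longrightarrow> j*k + r < k*n" for r using block_lt[OF j] by simp
  then show ?thesis using a by (auto simp: blk_def Sof_def)
qed

lemma Sof_blk:
  assumes S: "S \<subseteq> {0..<k*n}"
  shows "Sof k n (restrict (blk k S) {..<n}) = S"
proof
  show "Sof k n (restrict (blk k S) {..<n}) \<subseteq> S"
  proof
    fix i assume i: "i \<in> Sof k n (restrict (blk k S) {..<n})"
    then have ik: "i < k*n" by (simp add: Sof_def)
    then have "i mod k \<in> blk k S (i div k)" using i div_lt_n[OF ik] by (simp add: Sof_def)
    then have "(i div k)*k + i mod k \<in> S" by (simp add: blk_def)
    then show "i \<in> S" by simp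
  qed
  show "S \<subseteq> Sof k n (restrict (blk k S) {..<n})"
  proof
    fix i assume i: "i \<in> S"
    then have ik: "i < k*n" using S by auto
    then have "k > 0" by (cases k) auto
    then show "i \<in> Sof k n (restrict (blk k S) {..<n})"
      using i ik div_lt_n[OF ik] by (auto simp: Sof_def blk_def mult.commute)
  qed
qed

lemma sum_PiE_S:
  assumes B: "B \<subseteq> {..<n}"
  shows "(\<Sum>a\<in>PiE {..<n} (\<lambda>j. if j \<in> B then odd_basis k else even_basis k). F a)
    = (\<Sum>S\<in>{S\<in>Pow {0..<k*n}. pat k n S = B}. F (restrict (blk k S) {..<n}))"
proof -
  let ?P = "PiE {..<n} (\<lambda>j. if j \<in> B then odd_basis k else even_basis k)"
  let ?T = "{S\<in>Pow {0..<k*n}. pat k n S = B}"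
  have f3: "Sof k n (restrict (blk k S) {..<n}) = S" if S: "S \<in> ?T" for S using S Sof_blk by auto
  have f4: "restrict (blk k S) {..<n} \<in> ?P" if S: "S \<in> ?T" for S
    using S blk_sub[of k S] by (auto simp: pat_def odd_basis_def even_basis_def)
  have f12: "restrict (blk k (Sof k n a)) {..<n} = a \<and> Sof k n a \<in> ?T" if a: "a \<in> ?P" for a
  proof -
    have asub: "\<And>j. j < n \<Longrightarrow> a j \<subseteq> {0..<k}"
      using a by (auto simp: PiE_def Pi_def odd_basis_def even_basis_def split: if_splits)
    have bl: "blk k (Sof k n a) j = a j" if j: "j < n" for j using blk_Sof[of j n a k, OF j asub[OF j]] .
    have "restrict (blk k (Sof k n a)) {..<n} = a"
      using a bl by (auto simp: PiE_def extensional_def fun_eq_iff)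
    moreover have "pat k n (Sof k n a) = B"
      using a bl B by (auto simp: pat_def PiE_def Pi_def odd_basis_def even_basis_def split: if_splits)
    ultimately show ?thesis by (auto simp: Sof_def)
  qed
  show ?thesis
    apply (rule sum.reindex_bij_witness[where i = "\<lambda>S. restrict (blk k S) {..<n}" and j = "\<lambda>a. Sof k n a"])
        apply (erule f12[THEN conjunct1])
       apply (erule f12[THEN conjunct2])
      apply (erule f3)
     apply (erule f4)
    apply (simp add: f12)
    done
qed

lemma inv_preserve:
  assumes p: "\<sigma> permutes {..<n}" and A: "A \<subseteq> {..<n}" and sA: "\<sigma> ` A = A"
  shows "\<And>j. j \<in> A \<Longrightarrow> hinv \<sigma> j \<in> A"
proof -
  fix j assume "j \<in> A"
  then obtain a where "a \<in> A" "j = \<sigma> a" using sA by blast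
  then show "hinv \<sigma> j \<in> A" using permutes_inverses(2)[OF p] by simp
qed

lemma perm_compl:
  assumes p: "\<sigma> permutes {..<n}" and X: "X \<subseteq> {..<n}"
  shows "\<sigma> ` ({..<n} - X) = {..<n} - \<sigma> ` X"
proof -
  have "\<sigma> ` ({..<n} - X) = \<sigma> ` {..<n} - \<sigma> ` X"
    by (rule image_set_diff[OF permutes_inj[OF p]])
  then show ?thesis using permutes_image[OF p] by simp
qed

lemma eta_eps_GT:
  assumes ps: "snd z permutes {..<n}" and m: "m \<le> n" and Hz: "snd z ` {..<n-m} = {..<n-m}"
  shows "(-1) ^ m * eta_eps_char k n m z = GT k n (wmat k n z) {n-m..<n}"
proof -
  define \<sigma> where "\<sigma> = snd z"
  define A where "A = {..<n-m}"
  define B where "B = {n-m..<n}"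
  have p: "\<sigma> permutes {..<n}" using ps by (simp add: \<sigma>_def)
  have AB: "A \<inter> B = {}" "A \<union> B = {..<n}" "B = {..<n} - A" using m by (auto simp: A_def B_def)
  have sA: "\<sigma> ` A = A" using Hz by (simp add: A_def \<sigma>_def)
  have sB: "\<sigma> ` B = B" using perm_compl[OF p, of A] sA AB by (auto simp: A_def)
  have hA: "\<And>j. j \<in> A \<Longrightarrow> hinv \<sigma> j \<in> A" by (rule inv_preserve[OF p _ sA]) (auto simp: A_def)
  have hB: "\<And>j. j \<in> B \<Longrightarrow> hinv \<sigma> j \<in> B" by (rule inv_preserve[OF p _ sB]) (auto simp: B_def)
  define f where "f = (\<lambda>j a b. wedge_sum_rep (fst z j) a b)"
  have "tensor_char (even_basis k) wedge_sum_rep A z * tensor_char (odd_basis k) wedge_sum_rep B z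
      = (\<Sum>c\<in>PiE (A \<union> B) (\<lambda>j. if j \<in> B then odd_basis k else even_basis k). \<Prod>j\<in>A \<union> B. f j (c j) (c (hinv \<sigma> j)))"
    unfolding tensor_char_def f_def \<sigma>_def
    by (rule tc_merge[OF AB(1)]) (use hA hB in \<open>auto simp: A_def B_def \<sigma>_def\<close>)
  also have "\<dots> = (\<Sum>S\<in>{S\<in>Pow {0..<k*n}. pat k n S = B}. \<Prod>j<n. f j (blk k S j) (blk k S (hinv \<sigma> j)))"
    unfolding AB(2)
  proof (subst sum_PiE_S)
    show "B \<subseteq> {..<n}" by (auto simp: B_def)
    show "(\<Sum>S\<in>{S\<in>Pow {0..<k*n}. pat k n S = B}. \<Prod>j\<in>{..<n}. f j (restrict (blk k S) {..<n} j) (restrict (blk k S) {..<n} (hinv \<sigma> j)))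
      = (\<Sum>S\<in>{S\<in>Pow {0..<k*n}. pat k n S = B}. \<Prod>j<n. f j (blk k S j) (blk k S (hinv \<sigma> j)))"
      using perm_inv_lt[OF p] by (intro sum.cong prod.cong refl) auto
  qed
  finally have tc: "tensor_char (even_basis k) wedge_sum_rep A z * tensor_char (odd_basis k) wedge_sum_rep B z
      = (\<Sum>S\<in>{S\<in>Pow {0..<k*n}. pat k n S = B}. \<Prod>j<n. f j (blk k S j) (blk k S (hinv \<sigma> j)))" .
  have cB: "card B = m" using m by (simp add: B_def)
  have "(-1) ^ m * eta_eps_char k n m z = (-1) ^ m * of_int (sign (restrict_perm \<sigma> B)) *
      (tensor_char (even_basis k) wedge_sum_rep A z * tensor_char (odd_basis k) wedge_sum_rep B z)"
    unfolding eta_eps_char_def A_def[symmetric] B_def[symmetric] \<sigma>_def[symmetric] by (simp add: algebra_simps)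
  also have "\<dots> = (-1) ^ m * of_int (sign (restrict_perm \<sigma> B)) *
      (\<Sum>S\<in>{S\<in>Pow {0..<k*n}. pat k n S = B}. \<Prod>j<n. f j (blk k S j) (blk k S (hinv \<sigma> j)))"
    by (simp only: tc)
  also have "\<dots> = (\<Sum>S\<in>{S\<in>Pow {0..<k*n}. pat k n S = B}. (-1) ^ card (pat k n S) * of_int (sign (restrict_perm \<sigma> (pat k n S))) *
          (\<Prod>j<n. f j (blk k S j) (blk k S (hinv \<sigma> j))))"
    by (subst sum_distrib_left) (intro sum.cong refl, auto simp: cB)
  also have "\<dots> = (\<Sum>S\<in>{S\<in>Pow {0..<k*n}. pat k n S = B}. (-1) ^ card S * pdet (wmat k n z) S)"
    by (intro sum.cong refl) (use per_S[of _ k n z] ps in \<open>auto simp: f_def \<sigma>_def\<close>)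
  also have "\<dots> = GT k n (wmat k n z) B" by (simp add: GT_def)
  finally show ?thesis by (simp add: B_def)
qed

lemma GT_noninv:
  assumes ps: "snd x permutes {..<n}" and U: "U \<subseteq> {..<n}" and ni: "snd x ` U \<noteq> U"
  shows "GT k n (wmat k n x) U = 0"
  unfolding GT_def
proof (rule sum.neutral, rule ballI)
  fix S assume S: "S \<in> {S\<in>Pow {0..<k*n}. pat k n S = U}"
  have "\<exists>j<n. dd k S j \<noteq> dd k S (hinv (snd x) j)"
  proof (rule ccontr)
    assume "\<not> (\<exists>j<n. dd k S j \<noteq> dd k S (hinv (snd x) j))"
    then have bal: "\<And>j. j < n \<Longrightarrow> dd k S (hinv (snd x) j) = dd k S j" by auto
    have dsig: "\<And>j. j < n \<Longrightarrow> dd k S (snd x j) = dd k S j"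
      using bal perm_lt[OF ps] permutes_inverses(2)[OF ps] by metis
    have "inv_set (snd x) n {j. j < n \<and> odd (dd k S j)}"
      by (rule inv_set_level[of "snd x" n "dd k S" odd, OF ps dsig])
    moreover have "{j. j < n \<and> odd (dd k S j)} = U" using S by (auto simp: pat_def dd_def)
    ultimately show False using ni by (simp add: inv_set_def)
  qed
  then show "(-1) ^ card S * pdet (wmat k n x) S = 0"
    using pdet_unbalanced[OF _ ps, of S k] S by auto
qed

lemma lambda_char_GT:
  shows "lambda_char (wmat k n x) = (\<Sum>U\<in>Pow {..<n}. GT k n (wmat k n x) U)"
proof -
  let ?M = "wmat k n x"
  let ?N = "k*n"
  have dr: "dim_row ?M = ?N" by (simp add: wmat_def)
  have "lambda_char ?M = (\<Sum>i=0..?N. \<Sum>S\<in>{S\<in>Pow {0..<?N}. card S = i}. (-1) ^ card S * pdet ?M S)"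
    unfolding lambda_char_def ext_char_def dr
  proof (intro sum.cong refl)
    fix i
    have "{S. S \<subseteq> {0..<?N} \<and> card S = i} = {S\<in>Pow {0..<?N}. card S = i}" by auto
    moreover have "wedge_entry ?M S S = pdet ?M S" if "S \<in> {S\<in>Pow {0..<?N}. card S = i}" for S
      using that finite_subset by (intro wedge_entry_pdet) auto
    ultimately show "(-1) ^ i * (\<Sum>S\<in>{S. S \<subseteq> {0..<?N} \<and> card S = i}. wedge_entry ?M S S)
      = (\<Sum>S\<in>{S\<in>Pow {0..<?N}. card S = i}. (-1) ^ card S * pdet ?M S)"
      by (simp add: sum_distrib_left)
  qed
  also have "\<dots> = (\<Sum>S\<in>Pow {0..<?N}. (-1) ^ card S * pdet ?M S)"
  proof (rule sum.group)
    show "card ` Pow {0..<?N} \<subseteq> {0..?N}"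
      using card_mono[of "{0..<?N}"] by fastforce
  qed auto
  also have "\<dots> = (\<Sum>U\<in>Pow {..<n}. \<Sum>S\<in>{S\<in>Pow {0..<?N}. pat k n S = U}. (-1) ^ card S * pdet ?M S)"
    by (rule sum.group[symmetric]) (auto simp: pat_def)
  also have "\<dots> = (\<Sum>U\<in>Pow {..<n}. GT k n ?M U)" by (simp add: GT_def)
  finally show ?thesis .
qed

lemma exists_perm_image:
  assumes U: "U \<subseteq> {..<n}" and cU: "card U = m" and m: "m \<le> n"
  shows "\<exists>\<tau>. \<tau> permutes {..<n} \<and> \<tau> ` {n-m..<n} = U"
proof -
  let ?L = "{n-m..<n}"
  have finU: "finite U" using U finite_subset by blast
  have cL: "card ?L = m" using m by simp
  obtain f where f: "bij_betw f ?L U" using finite_same_card_bij[of ?L U] finU cL cU by auto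
  have Lsub: "?L \<subseteq> {..<n}" by auto
  have c1: "card ({..<n} - ?L) = card ({..<n} - U)"
    using card_Diff_subset[OF _ Lsub] card_Diff_subset[OF finU U] cL cU by simp
  obtain g where g: "bij_betw g ({..<n} - ?L) ({..<n} - U)"
    using finite_same_card_bij[OF _ _ c1] by auto
  define \<tau> where "\<tau> = (\<lambda>x. if x \<in> ?L then f x else if x < n then g x else x)"
  have b1: "bij_betw \<tau> ?L U" using f by (rule bij_betw_cong[THEN iffD1, rotated]) (simp add: \<tau>_def)
  have b2: "bij_betw \<tau> ({..<n} - ?L) ({..<n} - U)"
    using g by (rule bij_betw_cong[THEN iffD1, rotated]) (auto simp: \<tau>_def)
  have "bij_betw \<tau> (?L \<union> ({..<n} - ?L)) (U \<union> ({..<n} - U))"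
    by (rule bij_betw_combine[OF b1 b2]) auto
  moreover have "?L \<union> ({..<n} - ?L) = {..<n}" "U \<union> ({..<n} - U) = {..<n}" using U by auto
  ultimately have "bij_betw \<tau> {..<n} {..<n}" by simp
  then have "\<tau> permutes {..<n}" by (rule bij_imp_permutes) (simp add: \<tau>_def)
  moreover have "\<tau> ` ?L = U" using b1 by (simp add: bij_betw_def)
  ultimately show ?thesis by blast
qed

lemma wmult_wi_cancel:
  assumes G: "subgroup_GL k \<Gamma>" and y: "y \<in> wreath \<Gamma> k n" and w: "w \<in> wreath \<Gamma> k n"
  shows "wmult k n y (wmult k n (wi k \<Gamma> n y) w) = w"
proof (rule prod_eqI)
  have p: "snd y permutes {..<n}" using wreathD(3)[OF y] .
  have ii: "hinv (hinv (snd y)) = snd y" using p by (simp add: permutes_inv_inv)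
  show "fst (wmult k n y (wmult k n (wi k \<Gamma> n y) w)) = fst w"
  proof
    fix j
    show "fst (wmult k n y (wmult k n (wi k \<Gamma> n y) w)) j = fst w j"
    proof (cases "j < n")
      case True
      have i: "hinv (snd y) j < n" using perm_inv_lt[OF p True] .
      have tj: "snd y (hinv (snd y) j) = j" using permutes_inverses(1)[OF p] by simp
      have A: "fst y j \<in> carrier_mat k k" using subgroup_carrier[OF G wreathD(1)[OF y True]] .
      have B: "ginv k \<Gamma> (fst y j) \<in> carrier_mat k k"
        using subgroup_carrier[OF G ginv(1)[OF G wreathD(1)[OF y True]]] .
      have C: "fst w j \<in> carrier_mat k k" using subgroup_carrier[OF G wreathD(1)[OF w True]] .
      have "fst (wmult k n y (wmult k n (wi k \<Gamma> n y) w)) j = fst y j * (ginv k \<Gamma> (fst y j) * fst w j)"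
        using True i tj by (simp add: wmult_def wi_def ii)
      also have "\<dots> = (fst y j * ginv k \<Gamma> (fst y j)) * fst w j" using assoc_mult_mat[OF A B C] by simp
      also have "\<dots> = fst w j" using ginv(2)[OF G wreathD(1)[OF y True]] C by simp
      finally show ?thesis .
    next
      case False
      then show ?thesis using wreathD(2)[OF w] by (simp add: wmult_def)
    qed
  qed
  show "snd (wmult k n y (wmult k n (wi k \<Gamma> n y) w)) = snd w"
    by (simp add: wmult_def wi_def o_assoc permutes_inv_o(1)[OF p])
qed

lemma image_hinv_image:
  assumes p: "\<tau> permutes {..<n}"
  shows "hinv \<tau> ` \<tau> ` X = X" "\<tau> ` hinv \<tau> ` X = X"
proof -
  show "hinv \<tau> ` \<tau> ` X = X" using permutes_inverses(2)[OF p] by (simp add: image_comp comp_def)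
  show "\<tau> ` hinv \<tau> ` X = X" using permutes_inverses(1)[OF p] by (simp add: image_comp comp_def)
qed

context
  fixes \<Gamma> :: "complex mat set" and k n m :: nat
  assumes G: "subgroup_GL k \<Gamma>" and m: "m \<le> n"
begin

lemma compl_L: "{..<n} - {n-m..<n} = {..<n-m}" "{..<n} - {..<n-m} = {n-m..<n}"
  using m by auto

lemma coset_char:
  assumes y: "y \<in> wreath \<Gamma> k n"
  shows "(\<lambda>h. wmult k n y h) ` young_sub \<Gamma> k n m = {w \<in> wreath \<Gamma> k n. snd w ` {n-m..<n} = snd y ` {n-m..<n}}"
proof
  let ?L = "{n-m..<n}" and ?A = "{..<n-m}"
  have py: "snd y permutes {..<n}" using wreathD(3)[OF y] .
  show "(\<lambda>h. wmult k n y h) ` young_sub \<Gamma> k n m \<subseteq> {w \<in> wreath \<Gamma> k n. snd w ` ?L = snd y ` ?L}"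
  proof
    fix w assume "w \<in> (\<lambda>h. wmult k n y h) ` young_sub \<Gamma> k n m"
    then obtain h where h: "h \<in> young_sub \<Gamma> k n m" and w: "w = wmult k n y h" by auto
    have hG: "h \<in> wreath \<Gamma> k n" and hA: "snd h ` ?A = ?A" using h by (auto simp: young_sub_def)
    have ph: "snd h permutes {..<n}" using wreathD(3)[OF hG] .
    have hL: "snd h ` ?L = ?L" using perm_compl[OF ph, of ?A] hA compl_L by auto
    have "w \<in> wreath \<Gamma> k n" using wmult_closed[OF G y hG] w by simp
    moreover have "snd w ` ?L = snd y ` ?L"
    proof -
      have "snd w ` ?L = (snd y \<circ> snd h) ` ?L" by (simp add: w wmult_def)
      also have "\<dots> = snd y ` (snd h ` ?L)" by (rule image_comp[symmetric])
      finally show ?thesis using hL by simp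
    qed
    ultimately show "w \<in> {w \<in> wreath \<Gamma> k n. snd w ` ?L = snd y ` ?L}" by simp
  qed
  show "{w \<in> wreath \<Gamma> k n. snd w ` ?L = snd y ` ?L} \<subseteq> (\<lambda>h. wmult k n y h) ` young_sub \<Gamma> k n m"
  proof
    fix w assume "w \<in> {w \<in> wreath \<Gamma> k n. snd w ` ?L = snd y ` ?L}"
    then have wG: "w \<in> wreath \<Gamma> k n" and wL: "snd w ` ?L = snd y ` ?L" by auto
    have pw: "snd w permutes {..<n}" using wreathD(3)[OF wG] .
    define h where "h = wmult k n (wi k \<Gamma> n y) w"
    have hG: "h \<in> wreath \<Gamma> k n" using wmult_closed[OF G wi_closed[OF G y] wG] by (simp add: h_def)
    have e1: "snd w ` ({..<n} - ?L) = {..<n} - snd w ` ?L" by (rule perm_compl[OF pw]) auto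
    have e2: "snd y ` ({..<n} - ?L) = {..<n} - snd y ` ?L" by (rule perm_compl[OF py]) auto
    have "snd w ` ?A = snd y ` ?A" using e1 e2 wL by (simp only: compl_L)
    moreover have "snd h ` ?A = hinv (snd y) ` (snd w ` ?A)"
    proof -
      have "snd h ` ?A = (hinv (snd y) \<circ> snd w) ` ?A" by (simp add: h_def wmult_def wi_def)
      also have "\<dots> = hinv (snd y) ` (snd w ` ?A)" by (rule image_comp[symmetric])
      finally show ?thesis .
    qed
    ultimately have "snd h ` ?A = ?A" using image_hinv_image(1)[OF py] by simp
    then have "h \<in> young_sub \<Gamma> k n m" using hG by (simp add: young_sub_def)
    moreover have "w = wmult k n y h" using wmult_wi_cancel[OF G y wG] by (simp add: h_def)
    ultimately show "w \<in> (\<lambda>h. wmult k n y h) ` young_sub \<Gamma> k n m" by blast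
  qed
qed

definition CU :: "nat set \<Rightarrow> ((nat \<Rightarrow> complex mat) \<times> (nat \<Rightarrow> nat)) set" where
  "CU U = {w \<in> wreath \<Gamma> k n. snd w ` {n-m..<n} = U}"

definition Us :: "nat set set" where
  "Us = {U. U \<subseteq> {..<n} \<and> card U = m}"

lemma CU_wit:
  assumes U: "U \<in> Us"
  shows "\<exists>y. y \<in> CU U"
proof -
  obtain \<tau> where t: "\<tau> permutes {..<n}" "\<tau> ` {n-m..<n} = U"
    using exists_perm_image[of U n m] U m by (auto simp: Us_def)
  have "((\<lambda>_. 1\<^sub>m k), \<tau>) \<in> wreath \<Gamma> k n"
    using t subgroup_one[OF G] by (intro wreathI) auto
  then show ?thesis using t by (auto simp: CU_def)
qed

lemma cosets_eq:
  "{(\<lambda>h. wmult k n y h) ` young_sub \<Gamma> k n m | y. y \<in> wreath \<Gamma> k n} = CU ` Us"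
proof
  show "{(\<lambda>h. wmult k n y h) ` young_sub \<Gamma> k n m | y. y \<in> wreath \<Gamma> k n} \<subseteq> CU ` Us"
  proof
    fix C assume "C \<in> {(\<lambda>h. wmult k n y h) ` young_sub \<Gamma> k n m | y. y \<in> wreath \<Gamma> k n}"
    then obtain y where y: "y \<in> wreath \<Gamma> k n" and C: "C = (\<lambda>h. wmult k n y h) ` young_sub \<Gamma> k n m" by auto
    have py: "snd y permutes {..<n}" using wreathD(3)[OF y] .
    have "snd y ` {n-m..<n} \<in> Us"
    proof -
      have "snd y ` {n-m..<n} \<subseteq> {..<n}" using perm_lt[OF py] by auto
      moreover have "card (snd y ` {n-m..<n}) = m"
        using card_image[OF permutes_inj_on[OF py]] m by simp
      ultimately show ?thesis by (simp add: Us_def)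
    qed
    moreover have "C = CU (snd y ` {n-m..<n})" using coset_char[OF y] C by (simp add: CU_def)
    ultimately show "C \<in> CU ` Us" by blast
  qed
  show "CU ` Us \<subseteq> {(\<lambda>h. wmult k n y h) ` young_sub \<Gamma> k n m | y. y \<in> wreath \<Gamma> k n}"
  proof
    fix C assume "C \<in> CU ` Us"
    then obtain U where U: "U \<in> Us" and C: "C = CU U" by auto
    obtain y where y: "y \<in> CU U" using CU_wit[OF U] by blast
    have yG: "y \<in> wreath \<Gamma> k n" and yL: "snd y ` {n-m..<n} = U" using y by (auto simp: CU_def)
    have "C = (\<lambda>h. wmult k n y h) ` young_sub \<Gamma> k n m" using coset_char[OF yG] yL C by (simp add: CU_def)
    then show "C \<in> {(\<lambda>h. wmult k n y h) ` young_sub \<Gamma> k n m | y. y \<in> wreath \<Gamma> k n}" using yG by blast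
  qed
qed

lemma CU_inj: "inj_on CU Us"
proof
  fix U1 U2 assume U1: "U1 \<in> Us" and U2: "U2 \<in> Us" and eq: "CU U1 = CU U2"
  obtain y where y: "y \<in> CU U1" using CU_wit[OF U1] by blast
  then have "y \<in> CU U2" using eq by simp
  then show "U1 = U2" using y by (simp add: CU_def)
qed

lemma ind_eval:
  assumes x: "x \<in> wreath \<Gamma> k n"
  shows "ind_char (wreath \<Gamma> k n) (wmult k n) (winv \<Gamma> k n) (young_sub \<Gamma> k n m) (eta_eps_char k n m) x
    = (\<Sum>U\<in>{U. U \<subseteq> {..<n} \<and> card U = m}. if snd x ` U = U then (-1) ^ m * GT k n (wmat k n x) U else 0)"
proof -
  have px: "snd x permutes {..<n}" using wreathD(3)[OF x] .
  have "ind_char (wreath \<Gamma> k n) (wmult k n) (winv \<Gamma> k n) (young_sub \<Gamma> k n m) (eta_eps_char k n m) x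
     = (\<Sum>C\<in>CU ` Us. let y = (SOME y. y \<in> C); z = wmult k n (winv \<Gamma> k n y) (wmult k n x y)
          in if z \<in> young_sub \<Gamma> k n m then eta_eps_char k n m z else 0)"
    unfolding ind_char_def cosets_eq by simp
  also have "\<dots> = (\<Sum>U\<in>Us. let y = (SOME y. y \<in> CU U); z = wmult k n (winv \<Gamma> k n y) (wmult k n x y)
          in if z \<in> young_sub \<Gamma> k n m then eta_eps_char k n m z else 0)"
    by (rule sum.reindex[OF CU_inj, unfolded comp_def])
  also have "\<dots> = (\<Sum>U\<in>Us. if snd x ` U = U then (-1) ^ m * GT k n (wmat k n x) U else 0)"
  proof (rule sum.cong[OF refl])
    fix U assume U: "U \<in> Us"
    define y where "y = (SOME y. y \<in> CU U)"
    have "y \<in> CU U" unfolding y_def using CU_wit[OF U] by (rule someI_ex)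
    then have yG: "y \<in> wreath \<Gamma> k n" and yL: "snd y ` {n-m..<n} = U" by (auto simp: CU_def)
    have py: "snd y permutes {..<n}" using wreathD(3)[OF yG] .
    define z where "z = wmult k n (wi k \<Gamma> n y) (wmult k n x y)"
    have zG: "z \<in> wreath \<Gamma> k n" using wmult_closed[OF G wi_closed[OF G yG] wmult_closed[OF G x yG]]
      by (simp add: z_def)
    have pz: "snd z permutes {..<n}" using wreathD(3)[OF zG] .
    have sz: "snd z = hinv (snd y) \<circ> (snd x \<circ> snd y)" by (simp add: z_def wmult_def wi_def)
    have Usub: "U \<subseteq> {..<n}" using U by (simp add: Us_def)
    have "snd y ` ({..<n} - {n-m..<n}) = {..<n} - snd y ` {n-m..<n}" by (rule perm_compl[OF py]) auto
    then have yA: "snd y ` {..<n-m} = {..<n} - U" by (simp only: compl_L yL)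
    have iff: "(snd z ` {..<n-m} = {..<n-m}) = (snd x ` U = U)"
    proof
      assume a: "snd z ` {..<n-m} = {..<n-m}"
      have "snd x ` ({..<n} - U) = snd y ` {..<n-m}"
      proof -
        have "(hinv (snd y) \<circ> (snd x \<circ> snd y)) ` {..<n-m} = hinv (snd y) ` (snd x ` (snd y ` {..<n-m}))"
          by (simp only: image_comp)
        then have "hinv (snd y) ` (snd x ` ({..<n} - U)) = {..<n-m}"
          using a by (simp only: sz yA)
        then have "snd y ` hinv (snd y) ` (snd x ` ({..<n} - U)) = snd y ` {..<n-m}" by simp
        then show ?thesis by (simp add: image_hinv_image[OF py])
      qed
      then have "{..<n} - snd x ` U = {..<n} - U" using perm_compl[OF px Usub] yA by simp
      moreover have "snd x ` U \<subseteq> {..<n}" using Usub perm_lt[OF px] by auto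
      ultimately show "snd x ` U = U" using Usub by blast
    next
      assume a: "snd x ` U = U"
      have "snd x ` ({..<n} - U) = {..<n} - U" using perm_compl[OF px Usub] a by simp
      have "(hinv (snd y) \<circ> (snd x \<circ> snd y)) ` {..<n-m} = hinv (snd y) ` (snd x ` (snd y ` {..<n-m}))"
        by (simp only: image_comp)
      also have "\<dots> = hinv (snd y) ` (snd y ` {..<n-m})" using yA \<open>snd x ` ({..<n} - U) = {..<n} - U\<close> by simp
      also have "\<dots> = {..<n-m}" by (rule image_hinv_image(1)[OF py])
      finally show "snd z ` {..<n-m} = {..<n-m}" by (simp only: sz)
    qed
    have zH: "(z \<in> young_sub \<Gamma> k n m) = (snd x ` U = U)"
      using zG iff by (simp add: young_sub_def)
    have val: "eta_eps_char k n m z = (-1) ^ m * GT k n (wmat k n x) U" if inv: "snd x ` U = U"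
    proof -
      have "(-1) ^ m * eta_eps_char k n m z = GT k n (wmat k n z) {n-m..<n}"
        by (rule eta_eps_GT[OF pz m]) (use iff inv in simp)
      also have "\<dots> = GT k n (wmat k n x) U"
      proof -
        have Ls: "{n-m..<n} \<subseteq> {..<n}" by auto
        show ?thesis unfolding z_def using GT_conj[OF G x yG Ls] yL by simp
      qed
      finally have e: "(-1) ^ m * eta_eps_char k n m z = GT k n (wmat k n x) U" .
      have "eta_eps_char k n m z = (-1) ^ m * ((-1) ^ m * eta_eps_char k n m z)"
        by (simp add: mult.assoc[symmetric] power_mult_distrib[symmetric])
      then show ?thesis using e by simp
    qed
    have wi: "winv \<Gamma> k n y = wi k \<Gamma> n y" by (rule winv_eq[OF G yG])
    show "(let y = (SOME y. y \<in> CU U); z = wmult k n (winv \<Gamma> k n y) (wmult k n x y)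
          in if z \<in> young_sub \<Gamma> k n m then eta_eps_char k n m z else 0)
       = (if snd x ` U = U then (-1) ^ m * GT k n (wmat k n x) U else 0)"
      unfolding y_def[symmetric] Let_def wi z_def[symmetric] using zH val by simp
  qed
  finally show ?thesis by (simp add: Us_def)
qed

end

theorem mainTheorem7:
  fixes \<Gamma> :: "complex mat set" and k n :: nat
  assumes "subgroup_GL k \<Gamma>" and "n \<ge> 1"
  shows "\<forall>x \<in> wreath \<Gamma> k n. lambda_char (wmat k n x) = eta_lambda \<Gamma> k n x"
proof
  fix x assume x: "x \<in> wreath \<Gamma> k n"
  have G: "subgroup_GL k \<Gamma>" using assms(1) .
  have px: "snd x permutes {..<n}" using wreathD(3)[OF x] .
  let ?F = "\<lambda>U. if snd x ` U = U then GT k n (wmat k n x) U else 0"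
  have "eta_lambda \<Gamma> k n x = (\<Sum>m = 0..n. (-1) ^ m * (\<Sum>U\<in>{U. U \<subseteq> {..<n} \<and> card U = m}.
      if snd x ` U = U then (-1) ^ m * GT k n (wmat k n x) U else 0))"
    unfolding eta_lambda_def
    by (intro sum.cong refl) (simp add: ind_eval[OF G _ x])
  also have "\<dots> = (\<Sum>m = 0..n. \<Sum>U\<in>{U\<in>Pow {..<n}. card U = m}. ?F U)"
  proof (intro sum.cong refl)
    fix m
    have "{U. U \<subseteq> {..<n} \<and> card U = m} = {U\<in>Pow {..<n}. card U = m}" by auto
    then show "(-1) ^ m * (\<Sum>U\<in>{U. U \<subseteq> {..<n} \<and> card U = m}.
      if snd x ` U = U then (-1) ^ m * GT k n (wmat k n x) U else 0) = (\<Sum>U\<in>{U\<in>Pow {..<n}. card U = m}. ?F U)"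
      by (simp add: sum_distrib_left mult.assoc[symmetric] power_mult_distrib[symmetric] if_distrib cong: if_cong)
  qed
  also have "\<dots> = (\<Sum>U\<in>Pow {..<n}. ?F U)"
  proof (rule sum.group)
    show "card ` Pow {..<n} \<subseteq> {0..n}" using card_mono[of "{..<n}"] by fastforce
  qed auto
  also have "\<dots> = (\<Sum>U\<in>Pow {..<n}. GT k n (wmat k n x) U)"
    by (intro sum.cong refl) (use GT_noninv[OF px] in auto)
  also have "\<dots> = lambda_char (wmat k n x)" by (rule lambda_char_GT[symmetric])
  finally show "lambda_char (wmat k n x) = eta_lambda \<Gamma> k n x" by simp
qed

end
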